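(* Let $\omega$ be a clustering state, let $j\mapsto A_j\in\mathcal O$ be a Cauchy sequence with respect to $\|\cdot\|_{\mathcal H_\omega}$, and let $A\in\mathcal H_\omega$ be its limit. Let $Q_\omega$ be the (unique) left pseudolocal charge with $Q_\omega(B)=\langle A,B\rangle_\omega$ for all $B\in\mathcal O$, and for each $j$ let $Q^{(j)}_\omega$ be the left pseudolocal charge of the local sequence $\sum_{x\in\mathbb Z^D}\iota_x(A_j)$. Then $Q_\omega=\lim_{j\to\infty}Q^{(j)}_\omega$, the limit being in the norm $\|P\|:=\sup\{|P(B)|/\|B\|_{\mathcal H_\omega}:B\in\mathcal O,\ \|B\|_{\mathcal H_\omega}>0\}$.
   Context: Setting: Fix $D\ge1$, $\mathbb Z^D$ with $\mathrm{dist}(x,y)=\sum_i|x_i-y_i|$, $\mathtt B(n)=\{x:\mathrm{dist}(x,0)\le n\}$. $\mathcal O$ is a complex normed space with distinguished $\mathbf 1$ of norm 1, finite-dimensional subspaces $\mathcal O_X$ ($X$ finite) with $\mathcal O_\emptyset=\mathbb C\mathbf 1$, $X\subset Y\Rightarrow\mathcal O_X\subset\mathcal O_Y$, $\mathcal O_X\cap\mathcal O_Y=\mathcal O_{X\cap Y}$, $\mathcal O=\bigcup_X\mathcal O_X$; $\mathrm{supp}(A)$ smallest $X$ with $A\in\mathcal O_X$, $|A|=|\mathrm{supp}A|$, $\mathrm{dist}(A,B)$ distance of supports ($\mathrm{dist}(A,\mathbf 1)=\infty$). Completion $\mathcal A$ is a unital $C^*$-algebra, $\mathcal O_X$ are $C^*$-subalgebras,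 disjointly supported elements commute with union support of the product; translations $\iota_x$ are $*$-automorphisms, $\iota_x\iota_y=\iota_{x+y}$, $\mathrm{supp}(\iota_xA)=\mathrm{supp}(A)+x$. Clustering state: translation-invariant state $\omega$ with $\nu:\mathbb N\to\mathbb R^+$, $f:\mathbb Z\to\mathbb R^+$, $p>D$, $f(d)\le d^{-p}$ ($d>0$), and $|\omega(AB)-\omega(A)\omega(B)|\le\nu(\ell)\|A\|\|B\|f(\mathrm{dist}(A,B))$ for $|A|,|B|<\ell$. $\langle A,B\rangle_\omega:=\sum_{x}(\omega(\iota_x(A)^*B)-\omega(A^* )\omega(B))$; $\mathcal H_\omega$ the completion of $\mathcal O$ modulo the null space, $\|B\|_{\mathcal H_\omega}=\langle B,B\rangle_\omega^{1/2}$. Pseudolocal sequence $Q=(Q_n)$, $Q_n\in\mathcal O_{\mathtt B(n)}$, w.r.t. $\omega$: $Q'_n:=Q_n-\omega(Q_n)\mathbf 1$ satisfies (I) $\omega(Q_n'^*Q'_n)\le\gamma n^D$ for some $\gamma>0$ and all $n$; (II) $Q_\omega(A):=\lim_n\omega(Q_n'^*A)$ exists for all $A\in\mathcal O$; (III) there is $0<k<1$ with $\lim_n\max_{x,y\in\mathtt B(kn)}|\omega(Q_n'^*\iota_xA)-\omega(Q_n'^*\iota_yA)|=0$ for all $A$. $Q_\omega$ is its left pseudolocal charge. Local sequence with density $C\in\mathcal O$, $\mathrm{supp}(C)\subset\mathtt B(u)$: $Q_n=\sum_{x\in\mathtt B(n-u)}\iota_x(C)$ for $n\ge u$, $Q_n=0$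 otherwise, denoted $\sum_x\iota_x(C)$; it is pseudolocal and its left charge is $B\mapsto\langle C,B\rangle_\omega$. Every element $A\in\mathcal H_\omega$ corresponds to a unique left pseudolocal charge $B\mapsto\langle A,B\rangle_\omega$. *)

theory Defs
  imports "HOL-Analysis.Analysis"
begin

text \<open>Lattice sites of Z^D are functions 'd => int for a finite index type 'd, D = CARD('d).
 The C*-algebra (completion of O) is the ambient type 'a; complex scalars act through the
 unital central embedding sc : complex => 'a; adj is the involution; Obs X is O_X.\<close>

definition zdist :: "('d::finite \<Rightarrow> int) \<Rightarrow> ('d \<Rightarrow> int) \<Rightarrow> int" where
  "zdist x y = (\<Sum>i\<in>UNIV. \<bar>x i - y i\<bar>)"

definition zadd :: "('d::finite \<Rightarrow> int) \<Rightarrow> ('d \<Rightarrow> int) \<Rightarrow> ('d \<Rightarrow> int)" where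
  "zadd x y = (\<lambda>i. x i + y i)"

text \<open>B(r) = {x. dist(x,0) \<le> r}, with a real radius (to allow B(k n)).\<close>
definition zball :: "real \<Rightarrow> ('d::finite \<Rightarrow> int) set" where
  "zball r = {x. real_of_int (zdist x (\<lambda>_. 0)) \<le> r}"

definition set_zdist :: "('d::finite \<Rightarrow> int) set \<Rightarrow> ('d \<Rightarrow> int) set \<Rightarrow> int" where
  "set_zdist X Y = Min {zdist x y | x y. x \<in> X \<and> y \<in> Y}"

definition cspan :: "(complex \<Rightarrow> 'a::ring_1) \<Rightarrow> 'a set \<Rightarrow> 'a set" where
  "cspan sc F = {y. \<exists>c. y = (\<Sum>f\<in>F. sc (c f) * f)}"

definition local_obs :: "(('d::finite \<Rightarrow> int) set \<Rightarrow> 'a set) \<Rightarrow> 'a set" where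
  "local_obs Obs = (\<Union>X\<in>{X. finite X}. Obs X)"

definition supp :: "(('d::finite \<Rightarrow> int) set \<Rightarrow> 'a set) \<Rightarrow> 'a \<Rightarrow> ('d \<Rightarrow> int) set" where
  "supp Obs A = \<Inter>{X. finite X \<and> A \<in> Obs X}"

definition quasi_local_algebra ::
  "(complex \<Rightarrow> 'a::{real_normed_algebra_1,banach}) \<Rightarrow> ('a \<Rightarrow> 'a)
   \<Rightarrow> (('d::finite \<Rightarrow> int) set \<Rightarrow> 'a set) \<Rightarrow> (('d \<Rightarrow> int) \<Rightarrow> 'a \<Rightarrow> 'a) \<Rightarrow> bool" where
  "quasi_local_algebra sc adj Obs \<iota> \<longleftrightarrow>
     \<comment> \<open>complex unital Banach algebra: central unital embedding of the scalars\<close>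
     sc 1 = 1 \<and> (\<forall>a b. sc (a + b) = sc a + sc b) \<and> (\<forall>a b. sc (a * b) = sc a * sc b)
   \<and> (\<forall>r. sc (complex_of_real r) = of_real r) \<and> (\<forall>c x. sc c * x = x * sc c)
   \<and> (\<forall>c x. norm (sc c * x) = cmod c * norm x)
     \<comment> \<open>C*-involution\<close>
   \<and> (\<forall>a. adj (adj a) = a) \<and> (\<forall>a b. adj (a + b) = adj a + adj b)
   \<and> (\<forall>a b. adj (a * b) = adj b * adj a) \<and> (\<forall>c a. adj (sc c * a) = sc (cnj c) * adj a)
   \<and> (\<forall>a. norm (adj a * a) = (norm a)\<^sup>2)
     \<comment> \<open>local structure: finite-dimensional C*-subalgebras O_X\<close>
   \<and> (\<forall>X. finite X \<longrightarrow> (\<exists>F. finite F \<and> F \<subseteq> Obs X \<and> Obs X = cspan sc F))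
   \<and> (\<forall>X. finite X \<longrightarrow> 1 \<in> Obs X \<and> (\<forall>a\<in>Obs X. \<forall>b\<in>Obs X. a * b \<in> Obs X)
                          \<and> (\<forall>a\<in>Obs X. adj a \<in> Obs X))
   \<and> Obs {} = range sc
   \<and> (\<forall>X Y. finite Y \<and> X \<subseteq> Y \<longrightarrow> Obs X \<subseteq> Obs Y)
   \<and> (\<forall>X Y. finite X \<and> finite Y \<longrightarrow> Obs X \<inter> Obs Y = Obs (X \<inter> Y))
   \<and> closure (local_obs Obs) = UNIV
   \<and> (\<forall>a\<in>local_obs Obs. \<forall>b\<in>local_obs Obs. supp Obs a \<inter> supp Obs b = {} \<longrightarrow>
        a * b = b * a \<and> (a \<noteq> 0 \<and> b \<noteq> 0 \<longrightarrow> supp Obs (a * b) = supp Obs a \<union> supp Obs b))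
     \<comment> \<open>translations: *-automorphisms, group action, shifting supports\<close>
   \<and> (\<forall>x. bij (\<iota> x))
   \<and> (\<forall>x a b. \<iota> x (a + b) = \<iota> x a + \<iota> x b) \<and> (\<forall>x a b. \<iota> x (a * b) = \<iota> x a * \<iota> x b)
   \<and> (\<forall>x c a. \<iota> x (sc c * a) = sc c * \<iota> x a) \<and> (\<forall>x a. \<iota> x (adj a) = adj (\<iota> x a))
   \<and> (\<forall>x. \<iota> x 1 = 1)
   \<and> (\<forall>x y. \<iota> x \<circ> \<iota> y = \<iota> (zadd x y))
   \<and> (\<forall>x a. a \<in> local_obs Obs \<longrightarrow> \<iota> x a \<in> local_obs Obs \<and> supp Obs (\<iota> x a) = zadd x ` supp Obs a)"

definition is_state :: "(complex \<Rightarrow> 'a::ring_1) \<Rightarrow> ('a \<Rightarrow> 'a) \<Rightarrow> ('a \<Rightarrow> complex) \<Rightarrow> bool" where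
  "is_state sc adj \<omega> \<longleftrightarrow> (\<forall>a b. \<omega> (a + b) = \<omega> a + \<omega> b) \<and> (\<forall>c a. \<omega> (sc c * a) = c * \<omega> a)
     \<and> (\<forall>a. Im (\<omega> (adj a * a)) = 0 \<and> Re (\<omega> (adj a * a)) \<ge> 0) \<and> \<omega> 1 = 1"

definition clustering_state ::
  "(complex \<Rightarrow> 'a::{real_normed_algebra_1,banach}) \<Rightarrow> ('a \<Rightarrow> 'a)
   \<Rightarrow> (('d::finite \<Rightarrow> int) set \<Rightarrow> 'a set) \<Rightarrow> (('d \<Rightarrow> int) \<Rightarrow> 'a \<Rightarrow> 'a) \<Rightarrow> ('a \<Rightarrow> complex) \<Rightarrow> bool" where
  "clustering_state sc adj Obs \<iota> \<omega> \<longleftrightarrow> is_state sc adj \<omega> \<and> (\<forall>x a. \<omega> (\<iota> x a) = \<omega> a)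
   \<and> (\<exists>(\<nu>::nat \<Rightarrow> real) (f::int \<Rightarrow> real) (p::real). p > real CARD('d)
        \<and> (\<forall>l. \<nu> l \<ge> 0) \<and> (\<forall>d. f d \<ge> 0) \<and> (\<forall>d>0. f d \<le> real_of_int d powr (- p))
        \<and> (\<forall>l A B. A \<in> local_obs Obs \<and> B \<in> local_obs Obs \<and> card (supp Obs A) < l \<and> card (supp Obs B) < l
               \<and> supp Obs A \<noteq> {} \<and> supp Obs B \<noteq> {} \<longrightarrow>
             cmod (\<omega> (A * B) - \<omega> A * \<omega> B)
               \<le> \<nu> l * norm A * norm B * f (set_zdist (supp Obs A) (supp Obs B))))"

definition hinner :: "('a \<Rightarrow> 'a) \<Rightarrow> (('d::finite \<Rightarrow> int) \<Rightarrow> 'a \<Rightarrow> 'a) \<Rightarrow> ('a::ring_1 \<Rightarrow> complex) \<Rightarrow> 'a \<Rightarrow> 'a \<Rightarrow> complex" where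
  "hinner adj \<iota> \<omega> A B = infsum (\<lambda>x. \<omega> (adj (\<iota> x A) * B) - \<omega> (adj A) * \<omega> B) UNIV"

definition hnorm :: "('a \<Rightarrow> 'a) \<Rightarrow> (('d::finite \<Rightarrow> int) \<Rightarrow> 'a \<Rightarrow> 'a) \<Rightarrow> ('a::ring_1 \<Rightarrow> complex) \<Rightarrow> 'a \<Rightarrow> real" where
  "hnorm adj \<iota> \<omega> B = sqrt (Re (hinner adj \<iota> \<omega> B B))"

definition centered :: "(complex \<Rightarrow> 'a::ring_1) \<Rightarrow> ('a \<Rightarrow> complex) \<Rightarrow> 'a \<Rightarrow> 'a" where
  "centered sc \<omega> Q = Q - sc (\<omega> Q)"

definition pseudolocal ::
  "(complex \<Rightarrow> 'a::{real_normed_algebra_1,banach}) \<Rightarrow> ('a \<Rightarrow> 'a)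
   \<Rightarrow> (('d::finite \<Rightarrow> int) set \<Rightarrow> 'a set) \<Rightarrow> (('d \<Rightarrow> int) \<Rightarrow> 'a \<Rightarrow> 'a) \<Rightarrow> ('a \<Rightarrow> complex)
   \<Rightarrow> (nat \<Rightarrow> 'a) \<Rightarrow> bool" where
  "pseudolocal sc adj Obs \<iota> \<omega> Qs \<longleftrightarrow>
     (\<forall>n. Qs n \<in> Obs (zball (real n)))
   \<and> (\<exists>\<gamma>>0. \<forall>n\<ge>1. Re (\<omega> (adj (centered sc \<omega> (Qs n)) * centered sc \<omega> (Qs n)))
                      \<le> \<gamma> * real n ^ CARD('d))
   \<and> (\<forall>A\<in>local_obs Obs. convergent (\<lambda>n. \<omega> (adj (centered sc \<omega> (Qs n)) * A)))
   \<and> (\<exists>k. 0 < k \<and> k < 1 \<and> (\<forall>A\<in>local_obs Obs.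
        (\<lambda>n. Max {cmod (\<omega> (adj (centered sc \<omega> (Qs n)) * \<iota> x A) - \<omega> (adj (centered sc \<omega> (Qs n)) * \<iota> y A))
                  | x y. x \<in> zball (k * real n) \<and> y \<in> zball (k * real n)}) \<longlonglongrightarrow> 0))"

definition left_charge :: "(complex \<Rightarrow> 'a::ring_1) \<Rightarrow> ('a \<Rightarrow> 'a) \<Rightarrow> ('a \<Rightarrow> complex) \<Rightarrow> (nat \<Rightarrow> 'a) \<Rightarrow> 'a \<Rightarrow> complex" where
  "left_charge sc adj \<omega> Qs B = lim (\<lambda>n. \<omega> (adj (centered sc \<omega> (Qs n)) * B))"

definition is_left_pseudolocal_charge ::
  "(complex \<Rightarrow> 'a::{real_normed_algebra_1,banach}) \<Rightarrow> ('a \<Rightarrow> 'a)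
   \<Rightarrow> (('d::finite \<Rightarrow> int) set \<Rightarrow> 'a set) \<Rightarrow> (('d \<Rightarrow> int) \<Rightarrow> 'a \<Rightarrow> 'a) \<Rightarrow> ('a \<Rightarrow> complex)
   \<Rightarrow> ('a \<Rightarrow> complex) \<Rightarrow> bool" where
  "is_left_pseudolocal_charge sc adj Obs \<iota> \<omega> P \<longleftrightarrow>
     (\<exists>Qs. pseudolocal sc adj Obs \<iota> \<omega> Qs \<and> (\<forall>B\<in>local_obs Obs. P B = left_charge sc adj \<omega> Qs B))"

text \<open>Local sequence with density C (supp C \<subseteq> B(u)): Q_n = sum_{x in B(n-u)} iota_x C for n \<ge> u, else 0.\<close>
definition local_seq :: "(('d::finite \<Rightarrow> int) \<Rightarrow> 'a \<Rightarrow> 'a::ring_1) \<Rightarrow> nat \<Rightarrow> 'a \<Rightarrow> nat \<Rightarrow> 'a" where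
  "local_seq \<iota> u C n = (if u \<le> n then (\<Sum>x\<in>zball (real (n - u)). \<iota> x C) else 0)"

text \<open>||P|| = sup { |P(B)| / ||B||_H : B in O, ||B||_H > 0 } (in ereal; sup of the empty set read as 0).\<close>
definition charge_norm :: "('a \<Rightarrow> 'a) \<Rightarrow> (('d::finite \<Rightarrow> int) set \<Rightarrow> 'a set) \<Rightarrow> (('d \<Rightarrow> int) \<Rightarrow> 'a \<Rightarrow> 'a)
   \<Rightarrow> ('a::ring_1 \<Rightarrow> complex) \<Rightarrow> ('a \<Rightarrow> complex) \<Rightarrow> ereal" where
  "charge_norm adj Obs \<iota> \<omega> P =
     Sup (insert 0 ((\<lambda>B. ereal (cmod (P B) / hnorm adj \<iota> \<omega> B)) ` {B \<in> local_obs Obs. hnorm adj \<iota> \<omega> B > 0}))"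

end

theory Submission
  imports Defs "HOL-Library.Function_Algebras"
begin


lemma zadd_eq_plus: "zadd x y = x + y"
  by (simp add: zadd_def fun_eq_iff)

locale qlc =
  fixes sc :: "complex \<Rightarrow> 'a::{real_normed_algebra_1,banach}"
    and adj :: "'a \<Rightarrow> 'a"
    and Obs :: "('d::finite \<Rightarrow> int) set \<Rightarrow> 'a set"
    and \<iota> :: "('d \<Rightarrow> int) \<Rightarrow> 'a \<Rightarrow> 'a"
    and \<omega> :: "'a \<Rightarrow> complex"
  assumes QLA: "quasi_local_algebra sc adj Obs \<iota>"
    and CS: "clustering_state sc adj Obs \<iota> \<omega>"
begin

lemma Q1: "sc 1 = 1 \<and> (\<forall>a b. sc (a + b) = sc a + sc b) \<and> (\<forall>a b. sc (a * b) = sc a * sc b)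
   \<and> (\<forall>r. sc (complex_of_real r) = of_real r) \<and> (\<forall>c x. sc c * x = x * sc c)
   \<and> (\<forall>c x. norm (sc c * x) = cmod c * norm x)"
  using QLA unfolding quasi_local_algebra_def by (elim conjE) (intro conjI; assumption)
lemma Q2: "(\<forall>a. adj (adj a) = a) \<and> (\<forall>a b. adj (a + b) = adj a + adj b)
   \<and> (\<forall>a b. adj (a * b) = adj b * adj a) \<and> (\<forall>c a. adj (sc c * a) = sc (cnj c) * adj a)
   \<and> (\<forall>a. norm (adj a * a) = (norm a)\<^sup>2)"
  using QLA unfolding quasi_local_algebra_def by (elim conjE) (intro conjI; assumption)
lemma Q3: "(\<forall>X. finite X \<longrightarrow> (\<exists>F. finite F \<and> F \<subseteq> Obs X \<and> Obs X = cspan sc F))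
   \<and> (\<forall>X. finite X \<longrightarrow> 1 \<in> Obs X \<and> (\<forall>a\<in>Obs X. \<forall>b\<in>Obs X. a * b \<in> Obs X)
                          \<and> (\<forall>a\<in>Obs X. adj a \<in> Obs X))
   \<and> Obs {} = range sc
   \<and> (\<forall>X Y. finite Y \<and> X \<subseteq> Y \<longrightarrow> Obs X \<subseteq> Obs Y)
   \<and> (\<forall>X Y. finite X \<and> finite Y \<longrightarrow> Obs X \<inter> Obs Y = Obs (X \<inter> Y))"
  using QLA unfolding quasi_local_algebra_def by (elim conjE) (intro conjI; assumption)
lemma Q4: "(\<forall>x. bij (\<iota> x))
   \<and> (\<forall>x a b. \<iota> x (a + b) = \<iota> x a + \<iota> x b) \<and> (\<forall>x a b. \<iota> x (a * b) = \<iota> x a * \<iota> x b)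
   \<and> (\<forall>x c a. \<iota> x (sc c * a) = sc c * \<iota> x a) \<and> (\<forall>x a. \<iota> x (adj a) = adj (\<iota> x a))
   \<and> (\<forall>x. \<iota> x 1 = 1)
   \<and> (\<forall>x y. \<iota> x \<circ> \<iota> y = \<iota> (zadd x y))
   \<and> (\<forall>x a. a \<in> local_obs Obs \<longrightarrow> \<iota> x a \<in> local_obs Obs \<and> supp Obs (\<iota> x a) = zadd x ` supp Obs a)"
  using QLA unfolding quasi_local_algebra_def by (elim conjE) (intro conjI; assumption)

lemma sc1: "sc 1 = 1"
  using Q1[THEN conjunct1] by (auto simp: zadd_eq_plus)
lemma sc_add: "sc (a + b) = sc a + sc b"
  using Q1[THEN conjunct2, THEN conjunct1] by (auto simp: zadd_eq_plus)
lemma sc_mult: "sc (a * b) = sc a * sc b"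
  using Q1[THEN conjunct2, THEN conjunct2, THEN conjunct1] by (auto simp: zadd_eq_plus)
lemma sc_real: "sc (complex_of_real r) = of_real r"
  using Q1[THEN conjunct2, THEN conjunct2, THEN conjunct2, THEN conjunct1] by (auto simp: zadd_eq_plus)
lemma sc_comm: "sc c * x = x * sc c"
  using Q1[THEN conjunct2, THEN conjunct2, THEN conjunct2, THEN conjunct2, THEN conjunct1] by (auto simp: zadd_eq_plus)
lemma sc_norm: "norm (sc c * x) = cmod c * norm x"
  using Q1[THEN conjunct2, THEN conjunct2, THEN conjunct2, THEN conjunct2, THEN conjunct2] by (auto simp: zadd_eq_plus)
lemma adj_adj[simp]: "adj (adj a) = a"
  using Q2[THEN conjunct1] by (auto simp: zadd_eq_plus)
lemma adj_add: "adj (a + b) = adj a + adj b"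
  using Q2[THEN conjunct2, THEN conjunct1] by (auto simp: zadd_eq_plus)
lemma adj_mult: "adj (a * b) = adj b * adj a"
  using Q2[THEN conjunct2, THEN conjunct2, THEN conjunct1] by (auto simp: zadd_eq_plus)
lemma adj_sc_mult: "adj (sc c * a) = sc (cnj c) * adj a"
  using Q2[THEN conjunct2, THEN conjunct2, THEN conjunct2, THEN conjunct1] by (auto simp: zadd_eq_plus)
lemma cstar: "norm (adj a * a) = (norm a)\<^sup>2"
  using Q2[THEN conjunct2, THEN conjunct2, THEN conjunct2, THEN conjunct2] by (auto simp: zadd_eq_plus)
lemma Obs_fin: "finite X \<Longrightarrow> \<exists>F. finite F \<and> F \<subseteq> Obs X \<and> Obs X = cspan sc F"
  using Q3[THEN conjunct1] by (auto simp: zadd_eq_plus)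
lemma Obs_one: "finite X \<Longrightarrow> 1 \<in> Obs X"
  using Q3[THEN conjunct2, THEN conjunct1] by (auto simp: zadd_eq_plus)
lemma Obs_mult: "finite X \<Longrightarrow> a \<in> Obs X \<Longrightarrow> b \<in> Obs X \<Longrightarrow> a * b \<in> Obs X"
  using Q3[THEN conjunct2, THEN conjunct1] by (auto simp: zadd_eq_plus)
lemma Obs_adj: "finite X \<Longrightarrow> a \<in> Obs X \<Longrightarrow> adj a \<in> Obs X"
  using Q3[THEN conjunct2, THEN conjunct1] by (auto simp: zadd_eq_plus)
lemma Obs_empty: "Obs {} = range sc"
  using Q3[THEN conjunct2, THEN conjunct2, THEN conjunct1] by (auto simp: zadd_eq_plus)
lemma Obs_mono: "finite Y \<Longrightarrow> X \<subseteq> Y \<Longrightarrow> Obs X \<subseteq> Obs Y"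
  using Q3[THEN conjunct2, THEN conjunct2, THEN conjunct2, THEN conjunct1] by (auto simp: zadd_eq_plus)
lemma Obs_Int: "finite X \<Longrightarrow> finite Y \<Longrightarrow> Obs X \<inter> Obs Y = Obs (X \<inter> Y)"
  using Q3[THEN conjunct2, THEN conjunct2, THEN conjunct2, THEN conjunct2] by (auto simp: zadd_eq_plus)
lemma iota_bij: "bij (\<iota> x)"
  using Q4[THEN conjunct1] by (auto simp: zadd_eq_plus)
lemma iota_add: "\<iota> x (a + b) = \<iota> x a + \<iota> x b"
  using Q4[THEN conjunct2, THEN conjunct1] by (auto simp: zadd_eq_plus)
lemma iota_mult: "\<iota> x (a * b) = \<iota> x a * \<iota> x b"
  using Q4[THEN conjunct2, THEN conjunct2, THEN conjunct1] by (auto simp: zadd_eq_plus)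
lemma iota_sc_mult: "\<iota> x (sc c * a) = sc c * \<iota> x a"
  using Q4[THEN conjunct2, THEN conjunct2, THEN conjunct2, THEN conjunct1] by (auto simp: zadd_eq_plus)
lemma iota_adj: "\<iota> x (adj a) = adj (\<iota> x a)"
  using Q4[THEN conjunct2, THEN conjunct2, THEN conjunct2, THEN conjunct2, THEN conjunct1] by (auto simp: zadd_eq_plus)
lemma iota_one: "\<iota> x 1 = 1"
  using Q4[THEN conjunct2, THEN conjunct2, THEN conjunct2, THEN conjunct2, THEN conjunct2, THEN conjunct1] by (auto simp: zadd_eq_plus)
lemma iota_comp: "\<iota> x \<circ> \<iota> y = \<iota> (x + y)"
  using Q4[THEN conjunct2, THEN conjunct2, THEN conjunct2, THEN conjunct2, THEN conjunct2, THEN conjunct2, THEN conjunct1] by (auto simp: zadd_eq_plus)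
lemma iota_local: "a \<in> local_obs Obs \<Longrightarrow> \<iota> x a \<in> local_obs Obs"
  using Q4[THEN conjunct2, THEN conjunct2, THEN conjunct2, THEN conjunct2, THEN conjunct2, THEN conjunct2, THEN conjunct2] by (auto simp: zadd_eq_plus)
lemma iota_supp: "a \<in> local_obs Obs \<Longrightarrow> supp Obs (\<iota> x a) = (\<lambda>y. x + y) ` supp Obs a"
  using Q4[THEN conjunct2, THEN conjunct2, THEN conjunct2, THEN conjunct2, THEN conjunct2, THEN conjunct2, THEN conjunct2] by (auto simp: zadd_eq_plus)

lemma state: "is_state sc adj \<omega>" using CS unfolding clustering_state_def by blast
lemma om_add: "\<omega> (a + b) = \<omega> a + \<omega> b" using state unfolding is_state_def by blast
lemma om_sc: "\<omega> (sc c * a) = c * \<omega> a" using state unfolding is_state_def by blast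
lemma om_pos: "Im (\<omega> (adj a * a)) = 0" "Re (\<omega> (adj a * a)) \<ge> 0" using state unfolding is_state_def by blast+
lemma om_one: "\<omega> 1 = 1" using state unfolding is_state_def by blast
lemma om_inv: "\<omega> (\<iota> x a) = \<omega> a" using CS unfolding clustering_state_def by blast

lemma cluster: "\<exists>(\<nu>::nat \<Rightarrow> real) (f::int \<Rightarrow> real) (p::real). p > real CARD('d)
        \<and> (\<forall>l. \<nu> l \<ge> 0) \<and> (\<forall>d. f d \<ge> 0) \<and> (\<forall>d>0. f d \<le> real_of_int d powr (- p))
        \<and> (\<forall>l A B. A \<in> local_obs Obs \<and> B \<in> local_obs Obs \<and> card (supp Obs A) < l \<and> card (supp Obs B) < l
               \<and> supp Obs A \<noteq> {} \<and> supp Obs B \<noteq> {} \<longrightarrow>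
             cmod (\<omega> (A * B) - \<omega> A * \<omega> B)
               \<le> \<nu> l * norm A * norm B * f (set_zdist (supp Obs A) (supp Obs B)))"
  using CS unfolding clustering_state_def by (elim conjE) assumption


lemma sc0[simp]: "sc 0 = 0" using sc_add[of 0 0] by simp
lemma sc_uminus: "sc (- c) = - sc c" using sc_add[of c "-c"] by (simp add: add_eq_0_iff)
lemma sc_diff: "sc (a - b) = sc a - sc b" using sc_add[of a "-b"] sc_uminus[of b] by simp
lemma sc_sum: "sc (sum f S) = (\<Sum>x\<in>S. sc (f x))"
  by (induction S rule: infinite_finite_induct) (auto simp: sc_add)
lemma mult_sc: "x * sc c = sc c * x" using sc_comm by simp
lemma sc_scaleR: "sc (complex_of_real r) * a = r *\<^sub>R a" by (simp add: sc_real scaleR_conv_of_real)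
lemma sc_scaleR': "r *\<^sub>R a = sc (complex_of_real r) * a" by (simp add: sc_real scaleR_conv_of_real)

lemma adj0[simp]: "adj 0 = 0" using adj_add[of 0 0] by simp
lemma adj_uminus: "adj (- a) = - adj a" using adj_add[of a "-a"] by (simp add: add_eq_0_iff)
lemma adj_diff: "adj (a - b) = adj a - adj b" using adj_add[of a "-b"] adj_uminus[of b] by simp
lemma adj_sum: "adj (sum f S) = (\<Sum>x\<in>S. adj (f x))"
  by (induction S rule: infinite_finite_induct) (auto simp: adj_add)
lemma adj_one[simp]: "adj 1 = 1"
proof -
  have "1 = adj (adj (1::'a))" by simp
  also have "\<dots> = adj (1 * adj 1)" by simp
  also have "\<dots> = adj 1" by (subst adj_mult) simp
  finally show ?thesis by (rule sym)
qed
lemma adj_sc: "adj (sc c) = sc (cnj c)" using adj_sc_mult[of c 1] by simp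

lemma iota0[simp]: "\<iota> x 0 = 0" using iota_add[of x 0 0] by simp
lemma iota_uminus: "\<iota> x (- a) = - \<iota> x a" using iota_add[of x a "-a"] by (simp add: add_eq_0_iff)
lemma iota_diff: "\<iota> x (a - b) = \<iota> x a - \<iota> x b" using iota_add[of x a "-b"] iota_uminus[of x b] by simp
lemma iota_sum: "\<iota> x (sum f S) = (\<Sum>y\<in>S. \<iota> x (f y))"
  by (induction S rule: infinite_finite_induct) (auto simp: iota_add)
lemma iota_sc: "\<iota> x (sc c) = sc c" using iota_sc_mult[of x c 1] by (simp add: iota_one)
lemma iota_iota: "\<iota> x (\<iota> y a) = \<iota> (x + y) a" using iota_comp[of x y] by (metis comp_apply)
lemma iota_zero: "\<iota> 0 a = a"
proof -
  have "\<iota> 0 (\<iota> 0 a) = \<iota> 0 a" by (simp add: iota_iota)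
  thus ?thesis using iota_bij[of 0] by (simp add: bij_def inj_eq)
qed
lemma iota_inv: "\<iota> (- x) (\<iota> x a) = a" by (simp add: iota_iota iota_zero)
lemma iota_inv': "\<iota> x (\<iota> (- x) a) = a" by (simp add: iota_iota iota_zero)

lemma om0[simp]: "\<omega> 0 = 0" using om_add[of 0 0] by simp
lemma om_uminus: "\<omega> (- a) = - \<omega> a" using om_add[of a "-a"] by (simp add: add_eq_0_iff)
lemma om_diff: "\<omega> (a - b) = \<omega> a - \<omega> b" using om_add[of a "-b"] om_uminus[of b] by simp
lemma om_sum: "\<omega> (sum f S) = (\<Sum>x\<in>S. \<omega> (f x))"
  by (induction S rule: infinite_finite_induct) (auto simp: om_add)
lemma om_scc: "\<omega> (sc c) = c" using om_sc[of c 1] by (simp add: om_one)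
lemma om_mult_sc: "\<omega> (a * sc c) = c * \<omega> a" by (simp add: mult_sc om_sc)
lemma om_adj: "\<omega> (adj a) = cnj (\<omega> a)"
proof -
  have e1: "adj (a + 1) * (a + 1) = adj a * a + adj a + a + 1"
    by (simp add: adj_add algebra_simps)
  have "Im (\<omega> (adj (a + 1) * (a + 1))) = 0" by (rule om_pos)
  hence i1: "Im (\<omega> (adj a)) = - Im (\<omega> a)"
    unfolding e1 om_add om_one using om_pos(1)[of a] by simp
  have e2: "adj (a + sc \<i>) * (a + sc \<i>) = adj a * a + sc \<i> * adj a - sc \<i> * a + 1"
  proof -
    have "adj (a + sc \<i>) * (a + sc \<i>) = (adj a + sc (- \<i>)) * (a + sc \<i>)"
      by (simp add: adj_add adj_sc)
    also have "\<dots> = adj a * a + adj a * sc \<i> + sc (- \<i>) * a + sc (- \<i>) * sc \<i>"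
      by (simp add: algebra_simps)
    also have "sc (- \<i>) * sc \<i> = 1" by (simp flip: sc_mult add: sc1)
    also have "adj a * sc \<i> = sc \<i> * adj a" by (rule mult_sc)
    also have "sc (- \<i>) * a = - (sc \<i> * a)" by (simp add: sc_uminus)
    finally show ?thesis by simp
  qed
  have "Im (\<omega> (adj (a + sc \<i>) * (a + sc \<i>))) = 0" by (rule om_pos)
  hence i2: "Re (\<omega> (adj a)) = Re (\<omega> a)"
    unfolding e2 om_add om_diff om_one om_sc using om_pos(1)[of a] by simp
  show ?thesis using i1 i2 by (simp add: complex_eq_iff)
qed

end


lemma dist_from_closed_span:
  fixes F :: "'a::real_normed_vector set"
  assumes "closed (span F)" "g \<notin> span F"
  obtains d where "d > 0" "\<And>t w. w \<in> span F \<Longrightarrow> \<bar>t\<bar> * d \<le> norm (t *\<^sub>R g + w)"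
proof -
  from assms(1) have "open (- span F)" by (simp add: open_Compl)
  with assms(2) obtain e where e: "e > 0" "ball g e \<subseteq> - span F"
    using open_contains_ball by blast
  hence d: "\<forall>w\<in>span F. e \<le> norm (g - w)"
    by (auto simp: ball_def dist_norm subset_iff not_less)
  have key: "\<bar>t\<bar> * e \<le> norm (t *\<^sub>R g + w)" if "w \<in> span F" for t w
  proof (cases "t = 0")
    case True thus ?thesis by simp
  next
    case False
    have "(- inverse t) *\<^sub>R w \<in> span F" using that span_scale by blast
    hence "e \<le> norm (g - (- inverse t) *\<^sub>R w)" using d by blast
    also have "g - (- inverse t) *\<^sub>R w = inverse t *\<^sub>R (t *\<^sub>R g + w)"
      using False by (simp add: algebra_simps)
    also have "norm \<dots> = \<bar>inverse t\<bar> * norm (t *\<^sub>R g + w)" by simp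
    finally have "e \<le> \<bar>inverse t\<bar> * norm (t *\<^sub>R g + w)" .
    hence "\<bar>t\<bar> * e \<le> \<bar>t\<bar> * (\<bar>inverse t\<bar> * norm (t *\<^sub>R g + w))"
      by (simp add: mult_left_mono)
    also have "\<dots> = norm (t *\<^sub>R g + w)" using False by (simp add: abs_inverse)
    finally show ?thesis .
  qed
  show ?thesis using that[of e] e key by blast
qed



lemma closed_span_finite:
  fixes F :: "'a::banach set"
  assumes "finite F" shows "closed (span F)"
using assms proof (induction F rule: finite_induct)
  case empty show ?case by simp
next
  case (insert g F)
  show ?case
  proof (cases "g \<in> span F")
    case True thus ?thesis using insert.IH by (simp add: span_redundant)
  next
    case False
    obtain d where d: "d > 0" "\<And>t w. w \<in> span F \<Longrightarrow> \<bar>t\<bar> * d \<le> norm (t *\<^sub>R g + w)"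
      using dist_from_closed_span[OF insert.IH False] by blast
    show ?thesis
      unfolding closed_sequential_limits
    proof (intro allI impI, elim conjE)
      fix x l assume xs: "\<forall>n. x n \<in> span (insert g F)" and lim: "x \<longlonglongrightarrow> l"
      have "\<forall>n. \<exists>k. x n - k *\<^sub>R g \<in> span F" using xs span_breakdown_eq by blast
      then obtain t where t: "\<And>n. x n - t n *\<^sub>R g \<in> span F" by metis
      have "Cauchy t"
      proof (rule CauchyI)
        fix e::real assume "e>0"
        from lim have "Cauchy x" by (rule LIMSEQ_imp_Cauchy)
        then obtain M where M: "\<forall>m\<ge>M. \<forall>n\<ge>M. norm (x m - x n) < e * d"
          using \<open>e>0\<close> d(1) CauchyD mult_pos_pos by blast
        show "\<exists>M. \<forall>m\<ge>M. \<forall>n\<ge>M. norm (t m - t n) < e"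
        proof (intro exI allI impI)
          fix m n assume mn: "m \<ge> M" "n \<ge> M"
          have w: "(x m - t m *\<^sub>R g) - (x n - t n *\<^sub>R g) \<in> span F" using t span_diff by blast
          have "\<bar>t m - t n\<bar> * d \<le> norm ((t m - t n) *\<^sub>R g + ((x m - t m *\<^sub>R g) - (x n - t n *\<^sub>R g)))"
            using d(2)[OF w] .
          also have "(t m - t n) *\<^sub>R g + ((x m - t m *\<^sub>R g) - (x n - t n *\<^sub>R g)) = x m - x n"
            by (simp add: algebra_simps)
          also have "norm (x m - x n) < e * d" using M mn by blast
          finally show "norm (t m - t n) < e" using d(1) by simp
        qed
      qed
      then obtain \<tau> where tau: "t \<longlonglongrightarrow> \<tau>" using Cauchy_convergent_iff convergent_def by blast
      have "(\<lambda>n. x n - t n *\<^sub>R g) \<longlonglongrightarrow> l - \<tau> *\<^sub>R g" by (intro tendsto_intros lim tau)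
      hence "l - \<tau> *\<^sub>R g \<in> span F"
        using insert.IH t unfolding closed_sequential_limits
        by (metis (no_types, lifting))
      thus "l \<in> span (insert g F)" using span_breakdown_eq by blast
    qed
  qed
qed



lemma finite_span_bounded:
  fixes F :: "'a::banach set" and \<phi> :: "'a \<Rightarrow> 'b::real_normed_vector"
  assumes "finite F" and add: "\<And>a b. \<phi> (a + b) = \<phi> a + \<phi> b"
    and sca: "\<And>r a. \<phi> (r *\<^sub>R a) = r *\<^sub>R \<phi> a"
  shows "\<exists>L\<ge>0. \<forall>v\<in>span F. norm (\<phi> v) \<le> L * norm v"
using assms(1) proof (induction F rule: finite_induct)
  case empty
  have "\<phi> 0 = 0" using sca[of 0 0] by simp
  thus ?case by auto
next
  case (insert g F)
  then obtain L where L: "L \<ge> 0" "\<forall>v\<in>span F. norm (\<phi> v) \<le> L * norm v" by blast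
  show ?case
  proof (cases "g \<in> span F")
    case True thus ?thesis using L span_redundant[OF True] by metis
  next
    case False
    obtain d where d: "d > 0" "\<And>t w. w \<in> span F \<Longrightarrow> \<bar>t\<bar> * d \<le> norm (t *\<^sub>R g + w)"
      using dist_from_closed_span[OF closed_span_finite[OF insert.hyps(1)] False] by blast
    define L' where "L' = norm (\<phi> g) / d + L + L * norm g / d"
    have "L' \<ge> 0" unfolding L'_def using L d by simp
    moreover have "norm (\<phi> v) \<le> L' * norm v" if v: "v \<in> span (insert g F)" for v
    proof -
      obtain t where w: "v - t *\<^sub>R g \<in> span F" using v span_breakdown_eq by blast
      define w where "w = v - t *\<^sub>R g"
      have vw: "v = t *\<^sub>R g + w" unfolding w_def by simp
      have wF: "w \<in> span F" using w unfolding w_def .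
      have "\<bar>t\<bar> * d \<le> norm v" using d(2)[OF w, of t] by simp
      hence tle: "\<bar>t\<bar> \<le> norm v / d" using d(1) by (simp add: field_simps)
      have wle: "norm w \<le> norm v + \<bar>t\<bar> * norm g"
        using norm_triangle_ineq4[of v "t *\<^sub>R g"] unfolding w_def by simp
      have "norm (\<phi> v) = norm (t *\<^sub>R \<phi> g + \<phi> w)" using vw add sca by simp
      also have "\<dots> \<le> \<bar>t\<bar> * norm (\<phi> g) + L * norm w"
      proof -
        have "norm (\<phi> w) \<le> L * norm w" using L(2) wF by blast
        thus ?thesis using norm_triangle_ineq[of "t *\<^sub>R \<phi> g" "\<phi> w"] by simp
      qed
      also have "\<dots> \<le> (norm v / d) * norm (\<phi> g) + L * (norm v + (norm v / d) * norm g)"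
      proof -
        have 1: "\<bar>t\<bar> * norm (\<phi> g) \<le> (norm v / d) * norm (\<phi> g)"
          using mult_right_mono[OF tle, of "norm (\<phi> g)"] by simp
        have "norm w \<le> norm v + (norm v / d) * norm g"
          using wle tle by (meson add_left_mono mult_right_mono norm_ge_zero order_trans)
        hence 2: "L * norm w \<le> L * (norm v + (norm v / d) * norm g)"
          using L(1) by (simp add: mult_left_mono)
        show ?thesis using 1 2 by simp
      qed
      also have "\<dots> = L' * norm v" unfolding L'_def by (simp add: field_simps)
      finally show ?thesis .
    qed
    ultimately show ?thesis by blast
  qed
qed



context qlc begin

lemma cspan_add: "a \<in> cspan sc F \<Longrightarrow> b \<in> cspan sc F \<Longrightarrow> a + b \<in> cspan sc F"
proof -
  assume "a \<in> cspan sc F" "b \<in> cspan sc F"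
  then obtain c d where "a = (\<Sum>f\<in>F. sc (c f) * f)" "b = (\<Sum>f\<in>F. sc (d f) * f)"
    unfolding cspan_def by blast
  hence "a + b = (\<Sum>f\<in>F. sc (c f + d f) * f)"
    by (simp add: sc_add distrib_right sum.distrib)
  thus ?thesis unfolding cspan_def mem_Collect_eq by (rule exI[of _ "\<lambda>f. c f + d f"])
qed

lemma cspan_sc: "a \<in> cspan sc F \<Longrightarrow> sc t * a \<in> cspan sc F"
proof -
  assume "a \<in> cspan sc F"
  then obtain c where "a = (\<Sum>f\<in>F. sc (c f) * f)" unfolding cspan_def by blast
  hence "sc t * a = (\<Sum>f\<in>F. sc (t * c f) * f)"
    by (simp add: sc_mult sum_distrib_left mult.assoc)
  thus ?thesis unfolding cspan_def mem_Collect_eq by (rule exI[of _ "\<lambda>f. t * c f"])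
qed

lemma Obs_add: "finite X \<Longrightarrow> a \<in> Obs X \<Longrightarrow> b \<in> Obs X \<Longrightarrow> a + b \<in> Obs X"
  using Obs_fin cspan_add by metis
lemma Obs_sc: "finite X \<Longrightarrow> a \<in> Obs X \<Longrightarrow> sc t * a \<in> Obs X"
  using Obs_fin cspan_sc by metis
lemma Obs_scc: "finite X \<Longrightarrow> sc t \<in> Obs X"
  using Obs_sc[of X 1 t] Obs_one by simp
lemma Obs_0: "finite X \<Longrightarrow> 0 \<in> Obs X"
  using Obs_scc[of X 0] by simp
lemma Obs_uminus: "finite X \<Longrightarrow> a \<in> Obs X \<Longrightarrow> - a \<in> Obs X"
  using Obs_sc[of X a "-1"] by (simp add: sc_uminus sc1)
lemma Obs_diff: "finite X \<Longrightarrow> a \<in> Obs X \<Longrightarrow> b \<in> Obs X \<Longrightarrow> a - b \<in> Obs X"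
  using Obs_add[of X a "- b"] Obs_uminus by simp
lemma Obs_power: "finite X \<Longrightarrow> a \<in> Obs X \<Longrightarrow> a ^ n \<in> Obs X"
  by (induction n) (auto simp: Obs_one Obs_mult)

lemma local_obsI: "finite X \<Longrightarrow> a \<in> Obs X \<Longrightarrow> a \<in> local_obs Obs"
  unfolding local_obs_def by blast
lemma local_obsE: "a \<in> local_obs Obs \<Longrightarrow> (\<And>X. finite X \<Longrightarrow> a \<in> Obs X \<Longrightarrow> P) \<Longrightarrow> P"
  unfolding local_obs_def by blast

lemma local_two: assumes "a \<in> local_obs Obs" "b \<in> local_obs Obs"
  obtains X where "finite X" "a \<in> Obs X" "b \<in> Obs X"
proof -
  obtain X Y where "finite X" "a \<in> Obs X" "finite Y" "b \<in> Obs Y"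
    using assms local_obsE by metis
  thus ?thesis using that[of "X \<union> Y"] Obs_mono[of "X \<union> Y" X] Obs_mono[of "X \<union> Y" Y] by blast
qed

lemma local_add: "a \<in> local_obs Obs \<Longrightarrow> b \<in> local_obs Obs \<Longrightarrow> a + b \<in> local_obs Obs"
  by (metis local_two Obs_add local_obsI)
lemma local_diff: "a \<in> local_obs Obs \<Longrightarrow> b \<in> local_obs Obs \<Longrightarrow> a - b \<in> local_obs Obs"
  by (metis local_two Obs_diff local_obsI)
lemma local_mult: "a \<in> local_obs Obs \<Longrightarrow> b \<in> local_obs Obs \<Longrightarrow> a * b \<in> local_obs Obs"
  by (metis local_two Obs_mult local_obsI)
lemma local_sc: "a \<in> local_obs Obs \<Longrightarrow> sc t * a \<in> local_obs Obs"
  by (metis local_obsE Obs_sc local_obsI)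
lemma local_scc: "sc t \<in> local_obs Obs"
  using local_obsI[of "{}"] Obs_empty by simp
lemma local_adj: "a \<in> local_obs Obs \<Longrightarrow> adj a \<in> local_obs Obs"
  by (metis local_obsE Obs_adj local_obsI)
lemma local_sum: "(\<And>x. x \<in> S \<Longrightarrow> f x \<in> local_obs Obs) \<Longrightarrow> sum f S \<in> local_obs Obs"
proof (induction S rule: infinite_finite_induct)
  case (infinite A) thus ?case using local_scc[of 0] by simp
next
  case empty thus ?case using local_scc[of 0] by simp
next
  case (insert x F) thus ?case by (simp add: local_add)
qed

lemma supp_subset: "finite X \<Longrightarrow> a \<in> Obs X \<Longrightarrow> supp Obs a \<subseteq> X"
  unfolding supp_def by blast
lemma supp_finite: "a \<in> local_obs Obs \<Longrightarrow> finite (supp Obs a)"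
  by (metis local_obsE supp_subset finite_subset)

lemma in_Obs_supp: assumes "a \<in> local_obs Obs" shows "a \<in> Obs (supp Obs a)"
proof -
  obtain X0 where X0: "finite X0" "a \<in> Obs X0" using assms local_obsE by metis
  have gen: "finite Y \<Longrightarrow> Y \<subseteq> X0 \<Longrightarrow> (\<forall>y\<in>Y. \<exists>X. finite X \<and> a \<in> Obs X \<and> y \<notin> X) \<Longrightarrow> a \<in> Obs (X0 - Y)" for Y
  proof (induction Y rule: finite_induct)
    case empty thus ?case using X0 by simp
  next
    case (insert y Y)
    then obtain X where X: "finite X" "a \<in> Obs X" "y \<notin> X" by blast
    have "a \<in> Obs (X0 - Y)" using insert by blast
    hence "a \<in> Obs ((X0 - Y) \<inter> X)" using X Obs_Int[of "X0 - Y" X] X0(1) by blast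
    moreover have "(X0 - Y) \<inter> X \<subseteq> X0 - insert y Y" using X(3) by blast
    ultimately show ?case using Obs_mono[of "X0 - insert y Y"] X0(1) by blast
  qed
  have ss: "supp Obs a \<subseteq> X0" using X0 supp_subset by blast
  have "\<forall>y\<in>X0 - supp Obs a. \<exists>X. finite X \<and> a \<in> Obs X \<and> y \<notin> X"
    unfolding supp_def by blast
  hence "a \<in> Obs (X0 - (X0 - supp Obs a))" using gen[of "X0 - supp Obs a"] X0(1) by blast
  moreover have "X0 - (X0 - supp Obs a) = supp Obs a" using ss by blast
  ultimately show ?thesis by simp
qed

lemma supp_empty_sc: "a \<in> local_obs Obs \<Longrightarrow> supp Obs a = {} \<Longrightarrow> a \<in> range sc"
  using in_Obs_supp Obs_empty by metis

lemma supp_adj: assumes "a \<in> local_obs Obs" shows "supp Obs (adj a) = supp Obs a"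
proof -
  have "{X. finite X \<and> adj a \<in> Obs X} = {X. finite X \<and> a \<in> Obs X}"
    using Obs_adj[of _ a] Obs_adj[of _ "adj a"] by (metis adj_adj)
  thus ?thesis unfolding supp_def by simp
qed

lemma norm_adj: "norm (adj a) = norm a"
proof -
  have sq: "norm a ^ 2 \<le> norm (adj a) * norm a" for a
    using cstar[of a] norm_mult_ineq[of "adj a" a] by simp
  have le: "norm a \<le> norm (adj a)" for a
  proof (cases "norm a = 0")
    case True thus ?thesis by simp
  next
    case False
    hence "norm a * norm a \<le> norm (adj a) * norm a" using sq[of a] by (simp add: power2_eq_square)
    thus ?thesis using False by (simp add: mult_le_cancel_right)
  qed
  from le[of a] le[of "adj a"] show ?thesis by simp
qed

end


context qlc begin

lemma Obs_in_span: assumes "finite X"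
  obtains G where "finite G" "Obs X \<subseteq> span G"
proof -
  obtain F where F: "finite F" "F \<subseteq> Obs X" "Obs X = cspan sc F" using Obs_fin[OF assms] by blast
  define G where "G = F \<union> (\<lambda>f. sc \<i> * f) ` F"
  have "v \<in> span G" if vX: "v \<in> Obs X" for v
  proof -
    obtain c where c: "v = (\<Sum>f\<in>F. sc (c f) * f)" using vX F(3) unfolding cspan_def by blast
    have eq: "sc z * f = Re z *\<^sub>R f + Im z *\<^sub>R (sc \<i> * f)" for z f
    proof -
      have zz: "complex_of_real (Re z) + \<i> * complex_of_real (Im z) = z" by (simp add: complex_eq_iff)
      have "sc z * f = sc (complex_of_real (Re z) + \<i> * complex_of_real (Im z)) * f" by (simp only: zz)
      also have "\<dots> = sc (complex_of_real (Re z)) * f + sc \<i> * (sc (complex_of_real (Im z)) * f)"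
        unfolding sc_add sc_mult by (simp add: distrib_right mult.assoc)
      also have "\<dots> = Re z *\<^sub>R f + Im z *\<^sub>R (sc \<i> * f)"
        by (simp add: sc_scaleR)
      finally show ?thesis .
    qed
    have "(\<Sum>f\<in>F. sc (c f) * f) \<in> span G"
    proof (rule span_sum)
      fix f assume "f \<in> F"
      hence "f \<in> G" "sc \<i> * f \<in> G" unfolding G_def by auto
      thus "sc (c f) * f \<in> span G" unfolding eq[of "c f" f]
        by (intro span_add span_scale span_base)
    qed
    thus ?thesis using c by simp
  qed
  moreover have "finite G" unfolding G_def using F(1) by simp
  ultimately show ?thesis using that by blast
qed

end


context qlc begin
lemma iota_bounded_Obs: assumes "finite X"
  shows "\<exists>L\<ge>0. \<forall>v\<in>Obs X. norm (\<iota> x v) \<le> L * norm v"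
proof -
  obtain G where G: "finite G" "Obs X \<subseteq> span G" using Obs_in_span[OF assms] by blast
  have sca: "\<iota> x (r *\<^sub>R a) = r *\<^sub>R \<iota> x a" for r a
    by (simp add: sc_scaleR' iota_sc_mult)
  obtain L where "L \<ge> 0" "\<forall>v\<in>span G. norm (\<iota> x v) \<le> L * norm v"
    using finite_span_bounded[OF G(1), of "\<iota> x", OF iota_add sca] by blast
  thus ?thesis using G(2) by blast
qed

lemma adj_power: "adj (s ^ n) = (adj s) ^ n"
  by (induction n) (auto simp: adj_mult power_commutes)

lemma iota_power: "\<iota> x (s ^ n) = (\<iota> x s) ^ n"
  by (induction n) (auto simp: iota_mult iota_one)

lemma selfadj_norm_pow: assumes "adj s = s" shows "norm (s ^ (2 ^ k)) = norm s ^ (2 ^ k)"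
proof (induction k)
  case 0 thus ?case by simp
next
  case (Suc k)
  have sa: "adj (s ^ (2 ^ k)) = s ^ (2 ^ k)" by (simp add: adj_power assms)
  have "s ^ (2 ^ Suc k) = s ^ (2 ^ k) * s ^ (2 ^ k)" by (simp add: power_add[symmetric] mult_2)
  hence "norm (s ^ (2 ^ Suc k)) = norm (adj (s ^ (2 ^ k)) * s ^ (2 ^ k))" using sa by simp
  also have "\<dots> = (norm (s ^ (2 ^ k)))\<^sup>2" by (rule cstar)
  also have "\<dots> = norm s ^ (2 ^ Suc k)" using Suc by (simp add: power_mult[symmetric] mult.commute)
  finally show ?case .
qed

end


context qlc begin
lemma iota_norm_le: assumes "a \<in> local_obs Obs" shows "norm (\<iota> x a) \<le> norm a"
proof -
  obtain X where X: "finite X" "a \<in> Obs X" using assms local_obsE by metis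
  define h where "h = adj a * a"
  have hX: "h \<in> Obs X" unfolding h_def using Obs_mult[OF X(1) Obs_adj[OF X] X(2)] .
  have hs: "adj h = h" unfolding h_def by (simp add: adj_mult)
  define g where "g = \<iota> x h"
  have gs: "adj g = g" unfolding g_def using hs by (simp flip: iota_adj)
  obtain L where L: "L \<ge> 0" "\<forall>v\<in>Obs X. norm (\<iota> x v) \<le> L * norm v"
    using iota_bounded_Obs[OF X(1)] by blast
  have bound: "norm g ^ (2 ^ k) \<le> L * norm h ^ (2 ^ k)" for k
  proof -
    have "norm g ^ (2 ^ k) = norm (\<iota> x (h ^ (2 ^ k)))"
      using selfadj_norm_pow[OF gs, of k] by (simp add: g_def iota_power)
    also have "\<dots> \<le> L * norm (h ^ (2 ^ k))" using L(2) Obs_power[OF X(1) hX] by simp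
    also have "\<dots> \<le> L * norm h ^ (2 ^ k)" using L(1) norm_power_ineq[of h] by (simp add: mult_left_mono)
    finally show ?thesis .
  qed
  have gh: "norm g \<le> norm h"
  proof (rule ccontr)
    assume "\<not> norm g \<le> norm h"
    hence lt: "norm h < norm g" by simp
    show False
    proof (cases "norm h = 0")
      case True thus False using bound[of 0] lt by simp
    next
      case False
      define r where "r = norm g / norm h"
      have r1: "1 < r" unfolding r_def using lt False by simp
      obtain n where n: "L < r ^ n" using real_arch_pow[OF r1] by blast
      have "r ^ n \<le> r ^ (2 ^ n)" using r1 less_exp[of n] by (intro power_increasing) auto
      also have "r ^ (2 ^ n) = norm g ^ (2 ^ n) / norm h ^ (2 ^ n)" unfolding r_def by (simp add: power_divide)
      also have "\<dots> \<le> L" using bound[of n] False by (simp add: divide_le_eq)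
      finally show False using n by simp
    qed
  qed
  have "(norm (\<iota> x a))\<^sup>2 = norm (adj (\<iota> x a) * \<iota> x a)" by (rule cstar[symmetric])
  also have "\<dots> = norm g" unfolding g_def h_def iota_mult iota_adj ..
  also have "\<dots> \<le> norm h" by (rule gh)
  also have "\<dots> = (norm a)\<^sup>2" unfolding h_def by (rule cstar)
  finally show ?thesis by (rule power2_le_imp_le) simp
qed

end


definition zn :: "('d::finite \<Rightarrow> int) \<Rightarrow> int" where "zn x = (\<Sum>i\<in>UNIV. \<bar>x i\<bar>)"

lemma zn_nonneg: "zn x \<ge> 0" unfolding zn_def by (simp add: sum_nonneg)
lemma zdist_zn: "zdist x y = zn (x - y)" unfolding zdist_def zn_def by simp
lemma zball_zn: "zball r = {x. real_of_int (zn x) \<le> r}"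
  unfolding zball_def zdist_def zn_def by simp
lemma zn_comp_le: "\<bar>x i\<bar> \<le> zn x" unfolding zn_def
  using member_le_sum[of i UNIV "\<lambda>i. \<bar>x i\<bar>"] by simp
lemma zn_triangle: "zn (x + y) \<le> zn x + zn y" unfolding zn_def
  by (simp add: sum.distrib[symmetric] sum_mono abs_triangle_ineq)
lemma zn_minus: "zn (- x) = zn x" unfolding zn_def by simp

lemma finite_zn_le: "finite {x::'d::finite \<Rightarrow> int. zn x \<le> k}"
proof -
  have "{x::'d \<Rightarrow> int. zn x \<le> k} \<subseteq> PiE UNIV (\<lambda>_. {-k..k})"
  proof (rule subsetI)
    fix x :: "'d \<Rightarrow> int" assume "x \<in> {x. zn x \<le> k}"
    hence "x i \<in> {-k..k}" for i using zn_comp_le[of x i] by (simp add: abs_le_iff)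
    thus "x \<in> PiE UNIV (\<lambda>_. {-k..k})" by (simp add: PiE_UNIV_domain)
  qed
  moreover have "finite (PiE (UNIV::'d set) (\<lambda>_. {-k..k}))" by (simp add: finite_PiE)
  ultimately show ?thesis by (rule finite_subset)
qed

lemma finite_zball: "finite (zball r :: ('d::finite \<Rightarrow> int) set)"
proof -
  have "zball r \<subseteq> {x::'d \<Rightarrow> int. zn x \<le> \<lfloor>r\<rfloor>}" unfolding zball_zn by (auto simp: le_floor_iff)
  thus ?thesis using finite_zn_le finite_subset by blast
qed

lemma g_int_summable:
  assumes "q > 1"
  shows "(\<lambda>k::int. (1 + real_of_int \<bar>k\<bar>) powr (- q)) summable_on UNIV"
proof -
  define g where "g k = (1 + real_of_int \<bar>k\<bar>) powr (- q)" for k :: int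
  have "summable (\<lambda>n. real n powr (- q))" using assms summable_real_powr_iff by simp
  hence s: "summable (\<lambda>n. real (Suc n) powr (- q))" by (subst summable_Suc_iff)
  have s1: "(\<lambda>n. real (Suc n) powr (- q)) summable_on UNIV"
    using s by (subst summable_on_UNIV_nonneg_real_iff) auto
  have s': "summable (\<lambda>n. real (Suc (Suc n)) powr (- q))"
    using s summable_Suc_iff[of "\<lambda>n. real (Suc n) powr (- q)"] by simp
  have s2: "(\<lambda>n. real (Suc (Suc n)) powr (- q)) summable_on UNIV"
    using s' by (subst summable_on_UNIV_nonneg_real_iff) auto
  have "g summable_on (int ` UNIV)"
    by (subst summable_on_reindex) (use s1 in \<open>auto simp: g_def o_def add.commute\<close>)
  moreover have "g summable_on ((\<lambda>n. - int (Suc n)) ` UNIV)"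
    by (subst summable_on_reindex) (use s2 in \<open>auto simp: inj_on_def g_def o_def add.commute\<close>)
  ultimately have "g summable_on (int ` UNIV \<union> (\<lambda>n. - int (Suc n)) ` UNIV)"
    by (rule summable_on_union)
  moreover have "int ` UNIV \<union> (\<lambda>n. - int (Suc n)) ` UNIV = UNIV"
  proof (rule set_eqI)
    fix k :: int
    show "k \<in> int ` UNIV \<union> (\<lambda>n. - int (Suc n)) ` UNIV \<longleftrightarrow> k \<in> UNIV"
    proof (cases "k \<ge> 0")
      case True thus ?thesis by (auto intro: image_eqI[of _ _ "nat k"])
    next
      case False thus ?thesis by (auto intro!: image_eqI[of _ _ "nat (- k - 1)"])
    qed
  qed
  ultimately show ?thesis unfolding g_def by simp
qed

lemma prod_summable_UNIV:
  fixes g :: "int \<Rightarrow> real"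
  assumes "g summable_on UNIV" "\<And>k. g k \<ge> 0"
  shows "(\<lambda>x::'d::finite \<Rightarrow> int. \<Prod>i\<in>UNIV. g (x i)) summable_on UNIV"
proof -
  have ga: "Infinite_Set_Sum.abs_summable_on g UNIV"
    using assms(1) assms(2) unfolding abs_summable_equivalent[symmetric] by simp
  have "Infinite_Set_Sum.abs_summable_on (\<lambda>x::'d \<Rightarrow> int. \<Prod>i\<in>UNIV. g (x i)) (PiE UNIV (\<lambda>_. UNIV))"
    by (rule abs_summable_on_prod_PiE) (use ga in auto)
  hence "Infinite_Set_Sum.abs_summable_on (\<lambda>x::'d \<Rightarrow> int. \<Prod>i\<in>UNIV. g (x i)) UNIV"
    by (simp add: PiE_UNIV_domain)
  hence "(\<lambda>x::'d \<Rightarrow> int. norm (\<Prod>i\<in>UNIV. g (x i))) summable_on UNIV"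
    unfolding abs_summable_equivalent[symmetric] .
  moreover have "norm (\<Prod>i\<in>UNIV. g (x i)) = (\<Prod>i\<in>UNIV. g (x i))" for x :: "'d \<Rightarrow> int"
    using assms(2) by (simp add: prod_nonneg)
  ultimately show ?thesis by simp
qed

lemma zn_powr_bound:
  fixes x :: "'d::finite \<Rightarrow> int"
  assumes p: "p > 0" and z: "zn x \<ge> 1"
  shows "real_of_int (zn x) powr (- p)
         \<le> 2 powr p * (\<Prod>i\<in>UNIV. (1 + real_of_int \<bar>x i\<bar>) powr (- (p / real CARD('d))))"
proof -
  define D where "D = real CARD('d)"
  define q where "q = p / D"
  define z where "z = real_of_int (zn x)"
  have D0: "D > 0" unfolding D_def by simp
  have z1: "z \<ge> 1" unfolding z_def using z by simp
  define P where "P = (\<Prod>i\<in>UNIV. (1 + real_of_int \<bar>x i\<bar>))"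
  have Ppos: "P > 0" unfolding P_def by (intro prod_pos) (simp add: add_pos_nonneg)
  have "P \<le> (\<Prod>i\<in>(UNIV::'d set). 1 + z)"
    unfolding P_def z_def
  proof (intro prod_mono conjI)
    fix i :: 'd
    show "0 \<le> 1 + real_of_int \<bar>x i\<bar>" by simp
    have "\<bar>x i\<bar> \<le> zn x" by (rule zn_comp_le)
    thus "1 + real_of_int \<bar>x i\<bar> \<le> 1 + real_of_int (zn x)" by linarith
  qed
  also have "\<dots> = (1 + z) ^ CARD('d)" by simp
  also have "\<dots> \<le> (2 * z) ^ CARD('d)" using z1 by (intro power_mono) auto
  finally have PD: "P \<le> (2 * z) ^ CARD('d)" .
  have "(\<Prod>i\<in>UNIV. (1 + real_of_int \<bar>x i\<bar>) powr (- q)) = P powr (- q)"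
    unfolding P_def by (rule prod_powr_distrib[symmetric])
  also have "P powr (- q) \<ge> ((2 * z) ^ CARD('d)) powr (- q)"
    using PD Ppos D0 p unfolding q_def by (intro powr_mono2') (auto simp: divide_nonneg_pos)
  moreover have "((2 * z) ^ CARD('d)) powr (- q) = (2 * z) powr (- p)"
  proof -
    have "(2 * z) ^ CARD('d) = (2 * z) powr D" unfolding D_def using z1 by (simp add: powr_realpow)
    hence "((2 * z) ^ CARD('d)) powr (- q) = (2 * z) powr (D * (- q))" by (simp add: powr_powr)
    also have "D * (- q) = - p" unfolding q_def using D0 by simp
    finally show ?thesis .
  qed
  moreover have "(2 * z) powr (- p) = 2 powr (- p) * z powr (- p)" using z1 by (simp add: powr_mult)
  ultimately have "2 powr (- p) * z powr (- p) \<le> (\<Prod>i\<in>UNIV. (1 + real_of_int \<bar>x i\<bar>) powr (- q))"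
    by simp
  hence "2 powr p * (2 powr (- p) * z powr (- p)) \<le> 2 powr p * (\<Prod>i\<in>UNIV. (1 + real_of_int \<bar>x i\<bar>) powr (- q))"
    by (simp add: mult_left_mono)
  moreover have "2 powr p * (2 powr (- p) * z powr (- p)) = z powr (- p)"
    by (simp add: powr_minus field_simps)
  ultimately show ?thesis unfolding z_def q_def D_def by simp
qed

lemma lattice_summable:
  assumes "p > real CARD('d::finite)"
  shows "(\<lambda>x::'d \<Rightarrow> int. \<Prod>i\<in>UNIV. (1 + real_of_int \<bar>x i\<bar>) powr (- (p / real CARD('d)))) summable_on UNIV"
proof (rule prod_summable_UNIV)
  have "p / real CARD('d) > 1" using assms by simp
  thus "(\<lambda>k. (1 + real_of_int \<bar>k\<bar>) powr - (p / real CARD('d))) summable_on UNIV"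
    by (rule g_int_summable)
qed simp



lemma set_zdist_lower:
  fixes S T :: "('d::finite \<Rightarrow> int) set"
  assumes "finite S" "finite T" "S \<noteq> {}" "T \<noteq> {}"
    and "\<And>s. s \<in> S \<Longrightarrow> zn s \<le> R" "\<And>t. t \<in> T \<Longrightarrow> zn t \<le> R"
  shows "zn x - 2 * R \<le> set_zdist ((\<lambda>y. x + y) ` S) T"
proof -
  have eq: "{zdist y z | y z. y \<in> (\<lambda>y. x + y) ` S \<and> z \<in> T} = (\<lambda>(s,t). zdist (x + s) t) ` (S \<times> T)"
    by auto
  have fin: "finite ((\<lambda>(s,t). zdist (x + s) t) ` (S \<times> T))" using assms(1,2) by simp
  have ne: "(\<lambda>(s,t). zdist (x + s) t) ` (S \<times> T) \<noteq> {}" using assms(3,4) by simp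
  have "zn x - 2 * R \<le> zdist (x + s) t" if "s \<in> S" "t \<in> T" for s t
  proof -
    have xe: "(x + s - t) + (t - s) = x" by (simp add: algebra_simps)
    have "zn x \<le> zn (x + s - t) + zn (t - s)"
      using zn_triangle[of "x + s - t" "t - s"] unfolding xe .
    moreover have "zn (t - s) \<le> zn t + zn s"
      using zn_triangle[of t "- s"] zn_minus[of s] by simp
    moreover have "zdist (x + s) t = zn (x + s - t)" by (simp add: zdist_zn)
    ultimately show ?thesis using assms(5)[OF that(1)] assms(6)[OF that(2)] by linarith
  qed
  hence "\<forall>a\<in>(\<lambda>(s,t). zdist (x + s) t) ` (S \<times> T). zn x - 2 * R \<le> a" by auto
  thus ?thesis unfolding set_zdist_def eq using Min_ge_iff[OF fin ne] by simp
qed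

context qlc begin

definition tm :: "'a \<Rightarrow> 'a \<Rightarrow> ('d \<Rightarrow> int) \<Rightarrow> complex" where
  "tm A B x = \<omega> (adj (\<iota> x A) * B) - \<omega> (adj A) * \<omega> B"

lemma hinner_tm: "hinner adj \<iota> \<omega> A B = infsum (tm A B) UNIV"
  unfolding hinner_def tm_def by simp

lemma om_adj_iota: "\<omega> (adj (\<iota> x A)) = \<omega> (adj A)"
  by (simp flip: iota_adj add: om_inv)

lemma tm_zero_left: assumes "A \<in> range sc" shows "tm A B x = 0"
proof -
  obtain c where c: "A = sc c" using assms by blast
  show ?thesis unfolding tm_def c by (simp add: iota_sc adj_sc om_sc om_scc)
qed

lemma tm_zero_right: assumes "B \<in> range sc" shows "tm A B x = 0"
proof -
  obtain c where c: "B = sc c" using assms by blast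
  show ?thesis unfolding tm_def c by (simp add: om_mult_sc om_scc om_adj_iota)
qed

lemma tm_norm_summable:
  assumes A: "A \<in> local_obs Obs" and B: "B \<in> local_obs Obs"
  shows "(\<lambda>x. norm (tm A B x)) summable_on UNIV"
proof (cases "supp Obs A = {} \<or> supp Obs B = {}")
  case True
  have "tm A B x = 0" for x
  proof (cases "supp Obs A = {}")
    case True thus ?thesis using supp_empty_sc[OF A] tm_zero_left by simp
  next
    case False
    hence "supp Obs B = {}" using \<open>supp Obs A = {} \<or> supp Obs B = {}\<close> by simp
    thus ?thesis using supp_empty_sc[OF B] tm_zero_right by simp
  qed
  thus ?thesis by simp
next
  case False
  from cluster obtain \<nu> :: "nat \<Rightarrow> real" and f :: "int \<Rightarrow> real" and p :: real where
    cl1: "p > real CARD('d)" and cl2: "\<forall>l. \<nu> l \<ge> 0" and cl3: "\<forall>d. f d \<ge> 0"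
    and cl4: "\<forall>d>0. f d \<le> real_of_int d powr (- p)"
    and cl5: "\<forall>l A B. A \<in> local_obs Obs \<and> B \<in> local_obs Obs \<and> card (supp Obs A) < l \<and> card (supp Obs B) < l
               \<and> supp Obs A \<noteq> {} \<and> supp Obs B \<noteq> {} \<longrightarrow>
             cmod (\<omega> (A * B) - \<omega> A * \<omega> B)
               \<le> \<nu> l * norm A * norm B * f (set_zdist (supp Obs A) (supp Obs B))"
    by (elim exE conjE)
  define SA where "SA = supp Obs A"
  define SB where "SB = supp Obs B"
  have fA: "finite SA" and fB: "finite SB" unfolding SA_def SB_def using supp_finite A B by auto
  have nA: "SA \<noteq> {}" and nB: "SB \<noteq> {}" using False unfolding SA_def SB_def by auto
  define R where "R = Max (zn ` (SA \<union> SB))"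
  have Rb: "zn s \<le> R" if "s \<in> SA \<union> SB" for s
    unfolding R_def using fA fB that by (intro Max_ge) auto
  have R0: "R \<ge> 0" using Rb[of "SOME s. s \<in> SA"] zn_nonneg nA some_in_eq
    by (metis UnI1 order_trans)
  define l where "l = Suc (card SA + card SB)"
  define h where "h x = (\<Prod>i\<in>UNIV. (1 + real_of_int \<bar>x i\<bar>) powr (- (p / real CARD('d))))" for x :: "'d \<Rightarrow> int"
  define K where "K = \<nu> l * norm A * norm B * (2 powr p * 2 powr p)"
  have p0: "p > 0" using cl1 by (smt (verit) of_nat_0_le_iff)
  have far: "norm (tm A B x) \<le> K * h x" if x: "zn x > 4 * R" for x
  proof -
    define A' where "A' = adj (\<iota> x A)"
    have A'l: "A' \<in> local_obs Obs" unfolding A'_def using iota_local[OF A] by (rule local_adj)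
    have sA': "supp Obs A' = (\<lambda>y. x + y) ` SA"
      unfolding A'_def SA_def using supp_adj[OF iota_local[OF A]] iota_supp[OF A] by simp
    have "card (supp Obs A') = card SA" unfolding sA' by (simp add: card_image inj_on_def)
    hence c1: "card (supp Obs A') < l" unfolding l_def by simp
    have c2: "card (supp Obs B) < l" unfolding l_def SB_def by simp
    have ne1: "supp Obs A' \<noteq> {}" unfolding sA' using nA by simp
    have "cmod (\<omega> (A' * B) - \<omega> A' * \<omega> B) \<le> \<nu> l * norm A' * norm B * f (set_zdist (supp Obs A') (supp Obs B))"
      using cl5 A'l B c1 c2 ne1 nB unfolding SB_def by blast
    moreover have "tm A B x = \<omega> (A' * B) - \<omega> A' * \<omega> B"
      unfolding tm_def A'_def om_adj_iota ..
    ultimately have t1: "norm (tm A B x) \<le> \<nu> l * norm A' * norm B * f (set_zdist (supp Obs A') SB)"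
      unfolding SB_def by simp
    have nA': "norm A' \<le> norm A" unfolding A'_def norm_adj using iota_norm_le[OF A] .
    define d where "d = set_zdist (supp Obs A') SB"
    have dge: "zn x - 2 * R \<le> d" unfolding d_def sA'
      using set_zdist_lower[OF fA fB nA nB, of R x] Rb by auto
    have zx1: "zn x \<ge> 1" using x R0 by linarith
    have dpos: "d > 0" using dge x R0 by linarith
    have dhalf: "real_of_int (zn x) / 2 \<le> real_of_int d" using dge x by linarith
    have "f d \<le> real_of_int d powr (- p)" using cl4 dpos by blast
    also have "\<dots> \<le> (real_of_int (zn x) / 2) powr (- p)"
      using dhalf zx1 p0 by (intro powr_mono2') auto
    also have "\<dots> = 2 powr p * real_of_int (zn x) powr (- p)"
      using zx1 by (simp add: powr_divide powr_minus divide_simps)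
    also have "\<dots> \<le> 2 powr p * (2 powr p * h x)"
      unfolding h_def using zn_powr_bound[OF p0 zx1] by (intro mult_left_mono) auto
    finally have fd: "f d \<le> 2 powr p * 2 powr p * h x" by simp
    have "norm (tm A B x) \<le> \<nu> l * norm A' * norm B * f d" using t1 unfolding d_def .
    also have "\<dots> \<le> \<nu> l * norm A * norm B * f d"
      using nA' cl2 cl3 by (intro mult_right_mono mult_left_mono) auto
    also have "\<dots> \<le> \<nu> l * norm A * norm B * (2 powr p * 2 powr p * h x)"
      using fd cl2 by (intro mult_left_mono) auto
    also have "\<dots> = K * h x" unfolding K_def by simp
    finally show ?thesis .
  qed
  have hs: "h summable_on UNIV" unfolding h_def by (rule lattice_summable[OF cl1])
  hence "(\<lambda>x. K * h x) summable_on (UNIV - {x. zn x \<le> 4 * R})"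
    by (intro summable_on_cmult_right summable_on_subset_banach[OF hs]) auto
  hence s1: "(\<lambda>x. norm (tm A B x)) summable_on (UNIV - {x. zn x \<le> 4 * R})"
    by (rule summable_on_comparison_test) (use far in auto)
  have s2: "(\<lambda>x. norm (tm A B x)) summable_on {x. zn x \<le> 4 * R}"
    by (rule summable_on_finite[OF finite_zn_le])
  have "(\<lambda>x. norm (tm A B x)) summable_on ((UNIV - {x. zn x \<le> 4 * R}) \<union> {x. zn x \<le> 4 * R})"
    by (rule summable_on_union[OF s1 s2])
  thus ?thesis by simp
qed

lemma tm_summable: "A \<in> local_obs Obs \<Longrightarrow> B \<in> local_obs Obs \<Longrightarrow> tm A B summable_on UNIV"
  using tm_norm_summable summable_on_iff_abs_summable_on_complex by blast

end


context qlc begin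

lemma tm_add_left: "tm (A1 + A2) B x = tm A1 B x + tm A2 B x"
  unfolding tm_def by (simp add: iota_add adj_add distrib_right om_add algebra_simps)

lemma tm_sc_left: "tm (sc t * A) B x = cnj t * tm A B x"
  unfolding tm_def by (simp add: iota_sc_mult adj_sc_mult mult.assoc om_sc algebra_simps)

lemma tm_add_right: "tm A (B1 + B2) x = tm A B1 x + tm A B2 x"
  unfolding tm_def by (simp add: distrib_left om_add algebra_simps)

lemma tm_sc_right: "tm A (sc t * B) x = t * tm A B x"
proof -
  have "adj (\<iota> x A) * (sc t * B) = sc t * (adj (\<iota> x A) * B)"
    by (simp only: mult.assoc[symmetric] mult_sc)
  thus ?thesis unfolding tm_def by (simp add: om_sc algebra_simps)
qed

lemma tm_herm: "tm B A x = cnj (tm A B (- x))"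
proof -
  have "cnj (\<omega> (adj (\<iota> (- x) A) * B)) = \<omega> (adj B * \<iota> (- x) A)"
    by (simp flip: om_adj add: adj_mult)
  also have "\<dots> = \<omega> (\<iota> x (adj B * \<iota> (- x) A))" by (simp add: om_inv)
  also have "\<dots> = \<omega> (adj (\<iota> x B) * A)" by (simp add: iota_mult iota_adj iota_inv')
  finally have 1: "cnj (\<omega> (adj (\<iota> (- x) A) * B)) = \<omega> (adj (\<iota> x B) * A)" .
  have 2: "cnj (\<omega> (adj A) * \<omega> B) = \<omega> (adj B) * \<omega> A"
    by (simp add: om_adj)
  show ?thesis unfolding tm_def complex_cnj_diff 1 2 ..
qed

lemma hinner_add_left: "A1 \<in> local_obs Obs \<Longrightarrow> A2 \<in> local_obs Obs \<Longrightarrow> B \<in> local_obs Obs \<Longrightarrow>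
   hinner adj \<iota> \<omega> (A1 + A2) B = hinner adj \<iota> \<omega> A1 B + hinner adj \<iota> \<omega> A2 B"
  unfolding hinner_tm tm_add_left by (intro infsum_add tm_summable)

lemma hinner_add_right: "A \<in> local_obs Obs \<Longrightarrow> B1 \<in> local_obs Obs \<Longrightarrow> B2 \<in> local_obs Obs \<Longrightarrow>
   hinner adj \<iota> \<omega> A (B1 + B2) = hinner adj \<iota> \<omega> A B1 + hinner adj \<iota> \<omega> A B2"
  unfolding hinner_tm tm_add_right by (intro infsum_add tm_summable)

lemma hinner_sc_left: "hinner adj \<iota> \<omega> (sc t * A) B = cnj t * hinner adj \<iota> \<omega> A B"
  unfolding hinner_tm tm_sc_left by (rule infsum_cmult_right')

lemma hinner_sc_right: "hinner adj \<iota> \<omega> A (sc t * B) = t * hinner adj \<iota> \<omega> A B"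
  unfolding hinner_tm tm_sc_right by (rule infsum_cmult_right')

lemma hinner_herm: "hinner adj \<iota> \<omega> B A = cnj (hinner adj \<iota> \<omega> A B)"
proof -
  have "hinner adj \<iota> \<omega> B A = infsum (\<lambda>x. cnj (tm A B (- x))) UNIV"
    unfolding hinner_tm tm_herm[of B A] ..
  also have "\<dots> = cnj (infsum (\<lambda>x. tm A B (- x)) UNIV)" by simp
  also have "infsum (\<lambda>x. tm A B (- x)) UNIV = infsum (tm A B) (uminus ` UNIV)"
    by (subst infsum_reindex) (auto simp: o_def)
  also have "uminus ` (UNIV :: ('d \<Rightarrow> int) set) = UNIV"
    by (rule surjI[of _ uminus]) simp
  finally show ?thesis unfolding hinner_tm .
qed

lemma hinner_diff_left: "A1 \<in> local_obs Obs \<Longrightarrow> A2 \<in> local_obs Obs \<Longrightarrow> B \<in> local_obs Obs \<Longrightarrow>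
   hinner adj \<iota> \<omega> (A1 - A2) B = hinner adj \<iota> \<omega> A1 B - hinner adj \<iota> \<omega> A2 B"
proof -
  assume a: "A1 \<in> local_obs Obs" "A2 \<in> local_obs Obs" "B \<in> local_obs Obs"
  have e: "A1 - A2 = A1 + sc (-1) * A2" by (simp add: sc_uminus sc1)
  have "hinner adj \<iota> \<omega> (A1 - A2) B = hinner adj \<iota> \<omega> A1 B + hinner adj \<iota> \<omega> (sc (-1) * A2) B"
    unfolding e by (rule hinner_add_left[OF a(1) local_sc[OF a(2)] a(3)])
  thus ?thesis by (simp add: hinner_sc_left)
qed

end


lemma card_box: "card (PiE (UNIV::'d::finite set) (\<lambda>_. {a..<b::int})) = nat (b - a) ^ CARD('d)"
  by (simp add: card_PiE)

lemma tail_small: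
  fixes g :: "'b \<Rightarrow> real"
  assumes "g summable_on UNIV" "\<And>z. g z \<ge> 0" "e > 0"
  obtains K where "finite K" "infsum g (UNIV - K) \<le> e"
proof -
  obtain K where K: "finite K" "dist (sum g K) (infsum g UNIV) \<le> e"
    using infsum_finite_approximation[OF assms(1) assms(3)] by blast
  have "infsum g (UNIV - K) = infsum g UNIV - infsum g K"
    using assms(1) K(1) by (intro infsum_Diff) auto
  also have "\<dots> = infsum g UNIV - sum g K" using K(1) by simp
  also have "\<dots> \<le> e" using K(2) by (simp add: dist_real_def)
  finally show ?thesis using that K(1) by blast
qed

lemma tail_bound:
  fixes \<phi> :: "'b \<Rightarrow> complex"
  assumes s: "(\<lambda>z. norm (\<phi> z)) summable_on UNIV" and "S \<subseteq> T"
  shows "norm (infsum \<phi> (UNIV - T)) \<le> infsum (\<lambda>z. norm (\<phi> z)) (UNIV - S)"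
proof -
  have s1: "(\<lambda>z. norm (\<phi> z)) summable_on (UNIV - T)" by (rule summable_on_subset_banach[OF s]) auto
  have s2: "(\<lambda>z. norm (\<phi> z)) summable_on (UNIV - S)" by (rule summable_on_subset_banach[OF s]) auto
  have "norm (infsum \<phi> (UNIV - T)) \<le> infsum (\<lambda>z. norm (\<phi> z)) (UNIV - T)"
    by (rule norm_infsum_bound) (use s1 in \<open>simp add: abs_summable_equivalent[symmetric]\<close>)
  also have "\<dots> \<le> infsum (\<lambda>z. norm (\<phi> z)) (UNIV - S)"
    using assms(2) by (intro infsum_mono2[OF s1 s2]) auto
  finally show ?thesis .
qed

context qlc begin

lemma gram:
  assumes "finite F"
  shows "\<omega> (adj (\<Sum>y\<in>F. \<iota> y C) * (\<Sum>y\<in>F. \<iota> y C)) = (\<Sum>x\<in>F. \<Sum>y\<in>F. \<omega> (adj (\<iota> (x - y) C) * C))"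
proof -
  have "adj (\<Sum>y\<in>F. \<iota> y C) * (\<Sum>y\<in>F. \<iota> y C) = (\<Sum>x\<in>F. \<Sum>y\<in>F. adj (\<iota> x C) * \<iota> y C)"
    unfolding adj_sum by (rule sum_product)
  hence "\<omega> (adj (\<Sum>y\<in>F. \<iota> y C) * (\<Sum>y\<in>F. \<iota> y C)) = (\<Sum>x\<in>F. \<Sum>y\<in>F. \<omega> (adj (\<iota> x C) * \<iota> y C))"
    by (simp add: om_sum)
  also have "\<dots> = (\<Sum>x\<in>F. \<Sum>y\<in>F. \<omega> (adj (\<iota> (x - y) C) * C))"
  proof (intro sum.cong refl)
    fix x y
    have "\<omega> (adj (\<iota> x C) * \<iota> y C) = \<omega> (\<iota> (- y) (adj (\<iota> x C) * \<iota> y C))" by (simp add: om_inv)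
    also have "\<dots> = \<omega> (adj (\<iota> (- y + x) C) * C)" by (simp add: iota_mult iota_adj iota_iota iota_zero)
    also have "- y + x = x - y" by simp
    finally show "\<omega> (adj (\<iota> x C) * \<iota> y C) = \<omega> (adj (\<iota> (x - y) C) * C)" .
  qed
  finally show ?thesis .
qed

lemma centered_tm: "\<omega> (adj (\<iota> z (X - sc (\<omega> X))) * (X - sc (\<omega> X))) = tm X X z"
proof -
  have e1: "adj (\<iota> z (X - sc (\<omega> X))) = adj (\<iota> z X) - sc (cnj (\<omega> X))"
    by (simp add: iota_diff iota_sc adj_diff adj_sc)
  have e2: "(adj (\<iota> z X) - sc (cnj (\<omega> X))) * (X - sc (\<omega> X))
      = adj (\<iota> z X) * X - sc (\<omega> X) * adj (\<iota> z X) - sc (cnj (\<omega> X)) * X + sc (cnj (\<omega> X) * \<omega> X)"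
  proof -
    have "(adj (\<iota> z X) - sc (cnj (\<omega> X))) * (X - sc (\<omega> X))
       = adj (\<iota> z X) * X - adj (\<iota> z X) * sc (\<omega> X) - sc (cnj (\<omega> X)) * X + sc (cnj (\<omega> X)) * sc (\<omega> X)"
      by (simp add: left_diff_distrib right_diff_distrib)
    also have "adj (\<iota> z X) * sc (\<omega> X) = sc (\<omega> X) * adj (\<iota> z X)" by (rule mult_sc)
    also have "sc (cnj (\<omega> X)) * sc (\<omega> X) = sc (cnj (\<omega> X) * \<omega> X)" by (rule sc_mult[symmetric])
    finally show ?thesis .
  qed
  have "\<omega> (adj (\<iota> z (X - sc (\<omega> X))) * (X - sc (\<omega> X)))
      = \<omega> (adj (\<iota> z X) * X) - \<omega> X * \<omega> (adj X) - cnj (\<omega> X) * \<omega> X + cnj (\<omega> X) * \<omega> X"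
    unfolding e1 e2 om_add om_diff om_sc om_scc om_adj_iota ..
  thus ?thesis unfolding tm_def by (simp add: om_adj)
qed

end


context qlc begin

lemma hinner_pos:
  assumes X: "X \<in> local_obs Obs"
  shows "Re (hinner adj \<iota> \<omega> X X) \<ge> 0"
proof -
  define \<phi> where "\<phi> = tm X X"
  define I where "I = infsum \<phi> UNIV"
  define M where "M = infsum (\<lambda>z. norm (\<phi> z)) UNIV"
  have ns: "(\<lambda>z. norm (\<phi> z)) summable_on UNIV" unfolding \<phi>_def by (rule tm_norm_summable[OF X X])
  have s: "\<phi> summable_on UNIV" unfolding \<phi>_def by (rule tm_summable[OF X X])
  have M0: "M \<ge> 0" unfolding M_def by (intro infsum_nonneg) auto
  define C where "C = X - sc (\<omega> X)"
  have phiC: "\<phi> z = \<omega> (adj (\<iota> z C) * C)" for z unfolding \<phi>_def C_def by (rule centered_tm[symmetric])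
  have key: "Re I \<ge> - 2 * e" if e: "e > 0" for e
  proof -
    obtain K where K: "finite K" "infsum (\<lambda>z. norm (\<phi> z)) (UNIV - K) \<le> e"
      using tail_small[OF ns _ e] by auto
    define r where "r = Max (insert 0 (zn ` K))"
    have r0: "r \<ge> 0" unfolding r_def using K(1) by simp
    have rK: "zn z \<le> r" if "z \<in> K" for z unfolding r_def using K(1) that by simp
    define D where "D = real CARD('d)"
    have D0: "D > 0" unfolding D_def by simp
    define N :: int where "N = 2 * r + 1 + \<lceil>D * (2 * r) * M / e\<rceil>"
    have q0: "D * (2 * r) * M / e \<ge> 0" using D0 r0 M0 e by simp
    hence c0: "\<lceil>D * (2 * r) * M / e\<rceil> \<ge> 0" by simp
    have N1: "N > 2 * r" unfolding N_def using c0 by linarith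
    have Npos: "N > 0" using N1 r0 by simp
    have "D * (2 * r) * M / e \<le> real_of_int N" unfolding N_def using r0
      by (smt (verit, best) le_of_int_ceiling of_int_add of_int_mult of_int_nonneg)
    hence "D * (2 * r) * M \<le> real_of_int N * e" using e by (simp add: divide_le_eq)
    hence NB: "D * (2 * r) * M / real_of_int N \<le> e" using Npos by (simp add: divide_le_eq mult.commute)
    define F where "F = PiE (UNIV::'d set) (\<lambda>_. {0..<N})"
    define In where "In = PiE (UNIV::'d set) (\<lambda>_. {r..<N - r})"
    have finF: "finite F" unfolding F_def by (simp add: finite_PiE)
    have InF: "In \<subseteq> F" unfolding In_def F_def using r0 by (intro PiE_mono) auto
    have finI: "finite In" using InF finF finite_subset by blast
    have cF: "card F = nat N ^ CARD('d)" unfolding F_def card_box by simp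
    have cI: "card In = nat (N - 2 * r) ^ CARD('d)" unfolding In_def card_box by (simp add: algebra_simps)
    have inner: "K \<subseteq> (\<lambda>x. x - y) ` F" if y: "y \<in> In" for y
    proof
      fix z assume z: "z \<in> K"
      have "(z + y) i \<in> {0..<N}" for i
      proof -
        have "\<bar>z i\<bar> \<le> r" using zn_comp_le[of z i] rK[OF z] by simp
        moreover have "y i \<in> {r..<N - r}" using y unfolding In_def by (simp add: PiE_UNIV_domain Pi_iff)
        ultimately show ?thesis by auto
      qed
      hence "z + y \<in> F" unfolding F_def by (simp add: PiE_UNIV_domain)
      moreover have "z = (z + y) - y" by simp
      ultimately show "z \<in> (\<lambda>x. x - y) ` F" by blast
    qed
    define T where "T y = I - (\<Sum>x\<in>F. \<phi> (x - y))" for y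
    have Teq: "T y = infsum \<phi> (UNIV - (\<lambda>x. x - y) ` F)" for y
    proof -
      have inj: "inj_on (\<lambda>x. x - y) F" by (simp add: inj_on_def)
      have "(\<Sum>x\<in>F. \<phi> (x - y)) = sum \<phi> ((\<lambda>x. x - y) ` F)"
        using sum.reindex[OF inj, of \<phi>] by (simp add: o_def)
      also have "\<dots> = infsum \<phi> ((\<lambda>x. x - y) ` F)" using finF by simp
      finally have "(\<Sum>x\<in>F. \<phi> (x - y)) = infsum \<phi> ((\<lambda>x. x - y) ` F)" .
      moreover have "infsum \<phi> (UNIV - (\<lambda>x. x - y) ` F) = I - infsum \<phi> ((\<lambda>x. x - y) ` F)"
        unfolding I_def using s finF by (intro infsum_Diff) auto
      ultimately show ?thesis unfolding T_def by simp
    qed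
    have Tb: "norm (T y) \<le> M" for y
      using tail_bound[OF ns, of "{}" "(\<lambda>x. x - y) ` F"] unfolding Teq M_def by simp
    have Tb2: "norm (T y) \<le> e" if "y \<in> In" for y
      using tail_bound[OF ns inner[OF that]] K(2) unfolding Teq by simp
    have sumT: "(\<Sum>y\<in>F. T y) = of_nat (card F) * I - (\<Sum>x\<in>F. \<Sum>y\<in>F. \<phi> (x - y))"
    proof -
      have "(\<Sum>y\<in>F. T y) = (\<Sum>y\<in>F. I) - (\<Sum>y\<in>F. \<Sum>x\<in>F. \<phi> (x - y))"
        unfolding T_def by (rule sum_subtractf)
      also have "(\<Sum>y\<in>F. \<Sum>x\<in>F. \<phi> (x - y)) = (\<Sum>x\<in>F. \<Sum>y\<in>F. \<phi> (x - y))" by (rule sum.swap)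
      finally show ?thesis by simp
    qed
    have Gp: "Re (\<Sum>x\<in>F. \<Sum>y\<in>F. \<phi> (x - y)) \<ge> 0"
    proof -
      have "(\<Sum>x\<in>F. \<Sum>y\<in>F. \<phi> (x - y)) = \<omega> (adj (\<Sum>y\<in>F. \<iota> y C) * (\<Sum>y\<in>F. \<iota> y C))"
        unfolding phiC gram[OF finF] ..
      thus ?thesis using om_pos(2) by simp
    qed
    have nT: "norm (\<Sum>y\<in>F. T y) \<le> real (card In) * e + (real (card F) - real (card In)) * M"
    proof -
      have "norm (\<Sum>y\<in>F. T y) \<le> (\<Sum>y\<in>F. norm (T y))" by (rule norm_sum)
      also have "\<dots> = (\<Sum>y\<in>In. norm (T y)) + (\<Sum>y\<in>F - In. norm (T y))"
        using sum.subset_diff[OF InF finF] by (simp add: add.commute)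
      also have "(\<Sum>y\<in>In. norm (T y)) \<le> (\<Sum>y\<in>In. e)" using Tb2 by (intro sum_mono) auto
      also have "(\<Sum>y\<in>F - In. norm (T y)) \<le> (\<Sum>y\<in>F - In. M)" using Tb by (intro sum_mono) auto
      also have "(\<Sum>y\<in>In. e) + (\<Sum>y\<in>F - In. M) = real (card In) * e + real (card (F - In)) * M" by simp
      also have "real (card (F - In)) = real (card F) - real (card In)"
        using card_Diff_subset[OF finI InF] card_mono[OF finF InF] by simp
      finally show ?thesis by simp
    qed
    have cFpos: "real (card F) > 0" unfolding cF using Npos by simp
    have cIle: "real (card In) \<le> real (card F)" using card_mono[OF finF InF] by simp
    have "real (card F) * Re I = Re (\<Sum>x\<in>F. \<Sum>y\<in>F. \<phi> (x - y)) + Re (\<Sum>y\<in>F. T y)"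
      using sumT by simp
    moreover have "Re (\<Sum>y\<in>F. T y) \<ge> - norm (\<Sum>y\<in>F. T y)"
      using abs_Re_le_cmod[of "\<Sum>y\<in>F. T y"] by linarith
    ultimately have "real (card F) * Re I \<ge> - (real (card In) * e + (real (card F) - real (card In)) * M)"
      using Gp nT by linarith
    moreover have "real (card In) * e \<le> real (card F) * e" using cIle e by simp
    ultimately have L1: "real (card F) * Re I \<ge> - (real (card F) * e + (real (card F) - real (card In)) * M)"
      by linarith
    define a where "a = real_of_int (2 * r) / real_of_int N"
    have a01: "0 \<le> a" "a \<le> 1" unfolding a_def using N1 r0 Npos by (auto simp: divide_le_eq)
    have rI: "real (card In) = real_of_int (N - 2 * r) ^ CARD('d)"
    proof -
      have "real (nat (N - 2 * r)) = real_of_int (N - 2 * r)" using N1 by simp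
      thus ?thesis unfolding cI of_nat_power by simp
    qed
    have rF: "real (card F) = real_of_int N ^ CARD('d)"
    proof -
      have "real (nat N) = real_of_int N" using Npos by simp
      thus ?thesis unfolding cF of_nat_power by simp
    qed
    have ratio: "real_of_int (N - 2 * r) = real_of_int N * (1 + (- a))"
      unfolding a_def using Npos by (simp add: algebra_simps)
    have rIF: "real (card In) = real (card F) * (1 + (- a)) ^ CARD('d)"
      unfolding rI rF ratio by (simp add: power_mult_distrib)
    have bern: "1 + real CARD('d) * (- a) \<le> (1 + (- a)) ^ CARD('d)"
      using a01 by (intro Bernoulli_inequality) simp
    define \<rho> where "\<rho> = (1 + (- a)) ^ CARD('d)"
    have rho1: "1 - \<rho> \<le> D * a" using bern unfolding \<rho>_def D_def by simp
    have "(1 - \<rho>) * M \<le> (D * a) * M" using rho1 M0 by (rule mult_right_mono)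
    also have "(D * a) * M = D * (2 * r) * M / N" unfolding a_def by simp
    finally have rho2: "(1 - \<rho>) * M \<le> D * (2 * r) * M / N" .
    have "Re I \<ge> - (e + (1 - \<rho>) * M)"
    proof -
      have "- (real (card F) * e + (real (card F) - real (card In)) * M) = real (card F) * (- (e + (1 - \<rho>) * M))"
        unfolding rIF \<rho>_def by (simp add: algebra_simps)
      with L1 have "real (card F) * (- (e + (1 - \<rho>) * M)) \<le> real (card F) * Re I" by simp
      thus ?thesis using cFpos by simp
    qed
    thus ?thesis using rho2 NB by linarith
  qed
  have "Re I \<ge> 0"
  proof (rule ccontr)
    assume "\<not> Re I \<ge> 0"
    hence "- Re I / 4 > 0" by simp
    from key[OF this] \<open>\<not> Re I \<ge> 0\<close> show False by simp
  qed
  thus ?thesis unfolding hinner_tm I_def \<phi>_def .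
qed

end


context qlc begin

lemma hinner_self_real: "Im (hinner adj \<iota> \<omega> B B) = 0"
proof -
  have "hinner adj \<iota> \<omega> B B = cnj (hinner adj \<iota> \<omega> B B)" by (rule hinner_herm)
  hence "Im (hinner adj \<iota> \<omega> B B) = Im (cnj (hinner adj \<iota> \<omega> B B))" by (rule arg_cong)
  hence "Im (hinner adj \<iota> \<omega> B B) = - Im (hinner adj \<iota> \<omega> B B)" by simp
  thus ?thesis by simp
qed

lemma hinner_cs:
  assumes C: "C \<in> local_obs Obs" and B: "B \<in> local_obs Obs"
    and bpos: "Re (hinner adj \<iota> \<omega> B B) > 0"
  shows "norm (hinner adj \<iota> \<omega> C B) \<le> hnorm adj \<iota> \<omega> C * hnorm adj \<iota> \<omega> B"
proof -
  define z where "z = hinner adj \<iota> \<omega> C B"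
  define a where "a = Re (hinner adj \<iota> \<omega> C C)"
  define b where "b = Re (hinner adj \<iota> \<omega> B B)"
  have a0: "a \<ge> 0" unfolding a_def by (rule hinner_pos[OF C])
  have b0: "b > 0" unfolding b_def by (rule bpos)
  have wb: "hinner adj \<iota> \<omega> B B = complex_of_real b"
    unfolding b_def using hinner_self_real[of B] by (simp add: complex_eq_iff)
  have zBC: "hinner adj \<iota> \<omega> B C = cnj z" unfolding z_def by (rule hinner_herm)
  define t where "t = - cnj z / complex_of_real b"
  have sB: "sc t * B \<in> local_obs Obs" using B by (rule local_sc)
  have X: "C + sc t * B \<in> local_obs Obs" using C sB by (rule local_add)
  have "hinner adj \<iota> \<omega> (C + sc t * B) (C + sc t * B)
      = hinner adj \<iota> \<omega> C (C + sc t * B) + hinner adj \<iota> \<omega> (sc t * B) (C + sc t * B)"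
    by (rule hinner_add_left[OF C sB X])
  also have "hinner adj \<iota> \<omega> C (C + sc t * B) = hinner adj \<iota> \<omega> C C + t * z"
    unfolding hinner_add_right[OF C C sB] hinner_sc_right z_def ..
  also have "hinner adj \<iota> \<omega> (sc t * B) (C + sc t * B) = cnj t * (cnj z + t * complex_of_real b)"
    unfolding hinner_sc_left hinner_add_right[OF B C sB] hinner_sc_right zBC wb ..
  finally have exp: "hinner adj \<iota> \<omega> (C + sc t * B) (C + sc t * B)
     = hinner adj \<iota> \<omega> C C + t * z + cnj t * (cnj z + t * complex_of_real b)" .
  have tz: "t * z = - complex_of_real ((norm z)\<^sup>2 / b)"
  proof -
    have "t * z = - (z * cnj z) / complex_of_real b" unfolding t_def by (simp add: mult.commute)
    also have "z * cnj z = complex_of_real ((norm z)\<^sup>2)" by (rule complex_norm_square[symmetric])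
    finally show ?thesis by simp
  qed
  have ctt: "cnj t * t = complex_of_real ((norm z)\<^sup>2 / b\<^sup>2)"
  proof -
    have "cnj t * t = t * cnj t" by (rule mult.commute)
    also have "\<dots> = complex_of_real ((norm t)\<^sup>2)" by (rule complex_norm_square[symmetric])
    finally have "cnj t * t = complex_of_real ((norm t)\<^sup>2)" .
    moreover have "norm t = norm z / b" unfolding t_def using b0 by (simp add: norm_divide)
    ultimately show ?thesis by (simp add: power_divide)
  qed
  have "Re (hinner adj \<iota> \<omega> (C + sc t * B) (C + sc t * B)) = a + Re (t * z) + Re (cnj (t * z)) + Re (cnj t * t * complex_of_real b)"
    unfolding exp a_def by (simp add: distrib_left mult.assoc)
  also have "\<dots> = a - (norm z)\<^sup>2 / b"
    unfolding tz ctt using b0 by (simp add: power2_eq_square)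
  finally have "a - (norm z)\<^sup>2 / b \<ge> 0" using hinner_pos[OF X] by simp
  hence "(norm z)\<^sup>2 \<le> a * b" using b0 by (simp add: field_simps)
  hence "norm z \<le> sqrt (a * b)" using real_le_rsqrt by blast
  thus ?thesis unfolding z_def hnorm_def a_def[symmetric] b_def[symmetric] by (simp add: real_sqrt_mult)
qed

end


lemma zball_filterlim:
  "filterlim (\<lambda>n. zball (real (n - u)) :: ('d::finite \<Rightarrow> int) set) (finite_subsets_at_top UNIV) sequentially"
  unfolding filterlim_finite_subsets_at_top
proof (intro allI impI, elim conjE)
  fix X :: "('d \<Rightarrow> int) set" assume X: "finite X"
  define m where "m = Max (insert 0 (zn ` X))"
  have m: "zn x \<le> m" if "x \<in> X" for x unfolding m_def using X that by simp
  have m0: "m \<ge> 0" unfolding m_def using X by simp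
  show "\<forall>\<^sub>F n in sequentially. finite (zball (real (n - u))) \<and> X \<subseteq> zball (real (n - u)) \<and> zball (real (n - u)) \<subseteq> UNIV"
    using eventually_ge_at_top[of "u + nat m"]
  proof eventually_elim
    case (elim n)
    have "X \<subseteq> zball (real (n - u))"
    proof
      fix x assume "x \<in> X"
      hence "zn x \<le> m" by (rule m)
      moreover have "m \<le> int (n - u)" using elim m0 by linarith
      ultimately show "x \<in> zball (real (n - u))" unfolding zball_zn by simp
    qed
    thus ?case using finite_zball by blast
  qed
qed

lemma sum_zball_tendsto:
  fixes f :: "('d::finite \<Rightarrow> int) \<Rightarrow> complex"
  assumes "f summable_on UNIV"
  shows "(\<lambda>n. sum f (zball (real (n - u)))) \<longlonglongrightarrow> infsum f UNIV"
proof -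
  have "(sum f \<longlongrightarrow> infsum f UNIV) (finite_subsets_at_top UNIV)"
    using has_sum_infsum[OF assms] unfolding has_sum_def .
  from filterlim_compose[OF this zball_filterlim] show ?thesis .
qed

context qlc begin

lemma om_centered_seq:
  assumes "finite Z"
  shows "\<omega> (adj (centered sc \<omega> (\<Sum>x\<in>Z. \<iota> x C)) * B) = (\<Sum>x\<in>Z. tm C B x)"
proof -
  define Q where "Q = (\<Sum>x\<in>Z. \<iota> x C)"
  have oQ: "\<omega> Q = of_nat (card Z) * \<omega> C" unfolding Q_def by (simp add: om_sum om_inv)
  have "adj (centered sc \<omega> Q) * B = adj Q * B - sc (cnj (\<omega> Q)) * B"
    unfolding centered_def by (simp add: adj_diff adj_sc left_diff_distrib)
  hence "\<omega> (adj (centered sc \<omega> Q) * B) = \<omega> (adj Q * B) - cnj (\<omega> Q) * \<omega> B"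
    by (simp add: om_diff om_sc)
  also have "\<omega> (adj Q * B) = (\<Sum>x\<in>Z. \<omega> (adj (\<iota> x C) * B))"
    unfolding Q_def adj_sum sum_distrib_right om_sum ..
  also have "cnj (\<omega> Q) * \<omega> B = (\<Sum>x\<in>Z. \<omega> (adj C) * \<omega> B)"
    unfolding oQ by (simp add: om_adj)
  finally show ?thesis unfolding Q_def tm_def by (simp add: sum_subtractf)
qed

lemma local_charge:
  assumes C: "C \<in> local_obs Obs" and B: "B \<in> local_obs Obs"
  shows "left_charge sc adj \<omega> (local_seq \<iota> u C) B = hinner adj \<iota> \<omega> C B"
proof -
  have lim: "(\<lambda>n. sum (tm C B) (zball (real (n - u)))) \<longlonglongrightarrow> hinner adj \<iota> \<omega> C B"
    unfolding hinner_tm by (rule sum_zball_tendsto[OF tm_summable[OF C B]])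
  have ev: "\<forall>\<^sub>F n in sequentially. sum (tm C B) (zball (real (n - u)))
            = \<omega> (adj (centered sc \<omega> (local_seq \<iota> u C n)) * B)"
    using eventually_ge_at_top[of u]
  proof eventually_elim
    case (elim n)
    thus ?case unfolding local_seq_def using om_centered_seq[OF finite_zball] by simp
  qed
  have "(\<lambda>n. \<omega> (adj (centered sc \<omega> (local_seq \<iota> u C n)) * B)) \<longlonglongrightarrow> hinner adj \<iota> \<omega> C B"
    by (rule Lim_transform_eventually[OF lim ev])
  thus ?thesis unfolding left_charge_def by (rule limI)
qed

end


lemma ereal_pos_below:
  fixes a :: ereal assumes "a > 0" obtains e :: real where "e > 0" "ereal e < a"
proof (cases a)
  case (real r) thus ?thesis using assms that[of "r/2"] by simp
next
  case PInf thus ?thesis using that[of 1] by simp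
next
  case MInf thus ?thesis using assms by simp
qed

theorem theorem5p4:
  fixes sc :: "complex \<Rightarrow> 'a::{real_normed_algebra_1,banach}"
    and adj :: "'a \<Rightarrow> 'a"
    and Obs :: "('d::finite \<Rightarrow> int) set \<Rightarrow> 'a set"
    and \<iota> :: "('d \<Rightarrow> int) \<Rightarrow> 'a \<Rightarrow> 'a"
    and \<omega> :: "'a \<Rightarrow> complex"
    and As :: "nat \<Rightarrow> 'a"
    and u :: "nat \<Rightarrow> nat"
    and Q :: "'a \<Rightarrow> complex"
  assumes "quasi_local_algebra sc adj Obs \<iota>"
    and "clustering_state sc adj Obs \<iota> \<omega>"
    and "\<forall>j. As j \<in> local_obs Obs"
    and "\<forall>e>0. \<exists>N. \<forall>m\<ge>N. \<forall>n\<ge>N. hnorm adj \<iota> \<omega> (As m - As n) < e"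
    and "\<forall>j. supp Obs (As j) \<subseteq> zball (real (u j))"
    and "is_left_pseudolocal_charge sc adj Obs \<iota> \<omega> Q"
    and "\<forall>B\<in>local_obs Obs. (\<lambda>j. hinner adj \<iota> \<omega> (As j) B) \<longlonglongrightarrow> Q B"
  shows "(\<lambda>j. charge_norm adj Obs \<iota> \<omega>
             (\<lambda>B. Q B - left_charge sc adj \<omega> (local_seq \<iota> (u j) (As j)) B)) \<longlonglongrightarrow> 0"
proof -
  interpret qlc sc adj Obs \<iota> \<omega> using assms(1,2) by (rule qlc.intro)
  have Al: "\<And>j. As j \<in> local_obs Obs" using assms(3) by blast
  define cn where "cn j = charge_norm adj Obs \<iota> \<omega>
             (\<lambda>B. Q B - left_charge sc adj \<omega> (local_seq \<iota> (u j) (As j)) B)" for j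
  have cn0: "cn j \<ge> 0" for j unfolding cn_def charge_norm_def by (rule Sup_upper) simp
  have small: "\<exists>N. \<forall>j\<ge>N. cn j \<le> ereal e" if e: "e > 0" for e
  proof -
    obtain N where N: "\<forall>m\<ge>N. \<forall>n\<ge>N. hnorm adj \<iota> \<omega> (As m - As n) < e" using assms(4) e by blast
    have "cn j \<le> ereal e" if j: "j \<ge> N" for j
      unfolding cn_def charge_norm_def
    proof (rule Sup_least, elim insertE imageE)
      fix y :: ereal assume "y = 0" thus "y \<le> ereal e" using e by simp
    next
      fix y :: ereal and B assume y: "y = ereal (cmod (Q B - left_charge sc adj \<omega> (local_seq \<iota> (u j) (As j)) B) / hnorm adj \<iota> \<omega> B)"
        and B: "B \<in> {B \<in> local_obs Obs. 0 < hnorm adj \<iota> \<omega> B}"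
      have Bl: "B \<in> local_obs Obs" and hB: "hnorm adj \<iota> \<omega> B > 0" using B by auto
      have bpos: "Re (hinner adj \<iota> \<omega> B B) > 0" using hB unfolding hnorm_def by simp
      have lc: "left_charge sc adj \<omega> (local_seq \<iota> (u j) (As j)) B = hinner adj \<iota> \<omega> (As j) B"
        by (rule local_charge[OF Al Bl])
      have lim: "(\<lambda>m. hinner adj \<iota> \<omega> (As m - As j) B) \<longlonglongrightarrow> Q B - hinner adj \<iota> \<omega> (As j) B"
      proof -
        have "(\<lambda>m. hinner adj \<iota> \<omega> (As m) B - hinner adj \<iota> \<omega> (As j) B) \<longlonglongrightarrow> Q B - hinner adj \<iota> \<omega> (As j) B"
          using assms(7) Bl by (intro tendsto_diff) auto
        moreover have "hinner adj \<iota> \<omega> (As m - As j) B = hinner adj \<iota> \<omega> (As m) B - hinner adj \<iota> \<omega> (As j) B" for m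
          by (rule hinner_diff_left[OF Al Al Bl])
        ultimately show ?thesis by simp
      qed
      have bnd: "norm (hinner adj \<iota> \<omega> (As m - As j) B) \<le> e * hnorm adj \<iota> \<omega> B" if m: "m \<ge> N" for m
      proof -
        have "norm (hinner adj \<iota> \<omega> (As m - As j) B) \<le> hnorm adj \<iota> \<omega> (As m - As j) * hnorm adj \<iota> \<omega> B"
          by (rule hinner_cs[OF local_diff[OF Al Al] Bl bpos])
        also have "\<dots> \<le> e * hnorm adj \<iota> \<omega> B"
          using N m j hB by (intro mult_right_mono) (auto simp: less_imp_le)
        finally show ?thesis .
      qed
      have "norm (Q B - hinner adj \<iota> \<omega> (As j) B) \<le> e * hnorm adj \<iota> \<omega> B"
        using tendsto_norm[OF lim] bnd by (intro LIMSEQ_le_const2) auto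
      hence "cmod (Q B - left_charge sc adj \<omega> (local_seq \<iota> (u j) (As j)) B) / hnorm adj \<iota> \<omega> B \<le> e"
        unfolding lc using hB by (simp add: divide_le_eq)
      thus "y \<le> ereal e" unfolding y by simp
    qed
    thus ?thesis by blast
  qed
  have "cn \<longlonglongrightarrow> 0"
  proof (rule order_tendstoI)
    fix a :: ereal assume "a < 0"
    hence "a < cn j" for j using cn0[of j] by (rule less_le_trans)
    thus "\<forall>\<^sub>F j in sequentially. a < cn j" by simp
  next
    fix a :: ereal assume "a > 0"
    then obtain e where e: "e > 0" "ereal e < a" by (rule ereal_pos_below)
    obtain N where "\<forall>j\<ge>N. cn j \<le> ereal e" using small[OF e(1)] by blast
    thus "\<forall>\<^sub>F j in sequentially. cn j < a"
      unfolding eventually_sequentially using e(2) by (auto intro: le_less_trans)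
  qed
  thus ?thesis unfolding cn_def .
qed



end
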